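(* Let $\Sigma$ be a $d\times d$ positive semidefinite matrix with $\|\Sigma\|_{\mathrm{op}}\leq\frac{1}{2}\mathrm{Tr}(\Sigma)$. Then there exists a symmetric probability measure $\mu$ on $\mathbb{R}^{d}$ supported on $\{x\in\mathbb{R}^{d}:\|x\|_{2}^{2}=\mathrm{Tr}(\Sigma)\}$ with $\int_{\mathbb{R}^{d}}xx^{T}\,d\mu(x)=\Sigma$ such that for every $n\in\mathbb{N}$, if $X_{1},\ldots,X_{n}$ are i.i.d. random vectors with distribution $\mu$, then \[\mathbb{E}\left[W_{2,1}\Big(\mu,\frac{1}{2n}\sum_{i=1}^{n}(\delta_{X_{i}}+\delta_{-X_{i}})\Big)^{2}\right]\geq\frac{1}{16}\|\Sigma\|_{\mathrm{op}}\left(\frac{\mathrm{Tr}(\Sigma)}{n\|\Sigma\|_{\mathrm{op}}}+\sqrt{\frac{\mathrm{Tr}(\Sigma)}{n\|\Sigma\|_{\mathrm{op}}}}\right).\]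
   Context: A probability measure $\mu$ on $\mathbb{R}^{d}$ is symmetric if $\mu(A)=\mu(-A)$ for all measurable $A$. $\|\cdot\|_{\mathrm{op}}$ is the operator norm. For probability measures $\nu_{1},\nu_{2}$ on $\mathbb{R}$, $W_{2}(\nu_{1},\nu_{2})=\inf_{\gamma}\left(\int|x-y|^{2}\,d\gamma(x,y)\right)^{1/2}$ over couplings $\gamma$. For probability measures $\mu_{1},\mu_{2}$ on $\mathbb{R}^{d}$, $W_{2,1}(\mu_{1},\mu_{2})=\sup_{v\in\mathbb{R}^{d},\|v\|_{2}=1}W_{2}(v_{\#}\mu_{1},v_{\#}\mu_{2})$, where $v_{\#}\mu_{i}$ is the pushforward of $\mu_{i}$ under $x\mapsto\langle x,v\rangle$. $\delta_{x}$ is the Dirac mass at $x$. *)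

theory Defs
  imports "HOL-Probability.Probability"
begin

definition psd :: "real^'n^'n \<Rightarrow> bool" where
  "psd S \<longleftrightarrow> transpose S = S \<and> (\<forall>x. 0 \<le> x \<bullet> (S *v x))"

definition op_norm :: "real^'n^'n \<Rightarrow> real" where
  "op_norm S = onorm (\<lambda>x. S *v x)"

definition couplings :: "real measure \<Rightarrow> real measure \<Rightarrow> (real \<times> real) measure set" where
  "couplings \<nu>1 \<nu>2 = {\<gamma>. sets \<gamma> = sets borel \<and> prob_space \<gamma> \<and>
      distr \<gamma> borel fst = \<nu>1 \<and> distr \<gamma> borel snd = \<nu>2}"

definition W2_sq :: "real measure \<Rightarrow> real measure \<Rightarrow> ennreal" where
  "W2_sq \<nu>1 \<nu>2 = (INF \<gamma>\<in>couplings \<nu>1 \<nu>2. \<integral>\<^sup>+ p. ennreal ((fst p - snd p)\<^sup>2) \<partial>\<gamma>)"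

text \<open>Squared max-sliced Wasserstein distance: W_{2,1}^2 = sup over unit v of W_2^2 of projections.\<close>
definition W21_sq :: "('a::euclidean_space) measure \<Rightarrow> 'a measure \<Rightarrow> ennreal" where
  "W21_sq \<mu>1 \<mu>2 = (SUP v\<in>{v. norm v = 1}.
      W2_sq (distr \<mu>1 borel (\<lambda>x. x \<bullet> v)) (distr \<mu>2 borel (\<lambda>x. x \<bullet> v)))"

definition sym_empirical :: "(nat \<Rightarrow> 'a::real_vector) \<Rightarrow> nat \<Rightarrow> 'a measure" where
  "sym_empirical x n = measure_pmf (pmf_of_multiset
      (image_mset x (mset_set {..<n}) + image_mset (\<lambda>i. - x i) (mset_set {..<n})))"

definition symmetric_measure :: "('a::euclidean_space) measure \<Rightarrow> bool" where
  "symmetric_measure \<mu> \<longleftrightarrow> (\<forall>A\<in>sets borel. emeasure \<mu> A = emeasure \<mu> (uminus ` A))"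

end

theory Submission
  imports Defs "HOL-Probability.Probability"
begin

definition qf :: "real^'n^'n \<Rightarrow> real^'n \<Rightarrow> real" where
  "qf S x = x \<bullet> (S *v x)"

definition outer :: "real^'n \<Rightarrow> real^'n^'n" where
  "outer w = (\<chi> i j. w$i * w$j)"

lemma sym_form:
  fixes S :: "real^'n^'n"
  assumes "transpose S = S"
  shows "x \<bullet> (S *v y) = y \<bullet> (S *v x)"
proof -
  have "x \<bullet> (S *v y) = (x v* S) \<bullet> y" by (rule dot_lmul_matrix[symmetric])
  also have "x v* S = transpose S *v x"
    by (metis vector_transpose_matrix assms)
  also have "\<dots> = S *v x" using assms by simp
  finally show ?thesis by (simp add: inner_commute)
qed

lemma qf_add:
  fixes S :: "real^'n^'n"
  assumes "transpose S = S"
  shows "qf S (x + t *\<^sub>R y) = qf S x + 2 * t * (x \<bullet> (S *v y)) + t^2 * qf S y"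
  using sym_form[OF assms, of y x]
  by (simp add: qf_def matrix_vector_right_distrib matrix_vector_mult_scaleR
      inner_add_left inner_add_right algebra_simps power2_eq_square)

lemma quad_disc:
  fixes a b c :: real
  assumes "\<And>t. 0 \<le> a + 2*t*b + t^2*c" "c \<ge> 0"
  shows "b^2 \<le> a*c"
proof (cases "c = 0")
  case True
  show ?thesis
  proof (cases "b = 0")
    case False
    have "0 \<le> a + 2*(-(a+1)/(2*b))*b + (-(a+1)/(2*b))^2*c" by (rule assms(1))
    with True False show ?thesis by (simp add: field_simps)
  qed (use True assms(1)[of 0] in simp)
next
  case False
  hence c: "c > 0" using assms(2) by simp
  have "0 \<le> a + 2*(-b/c)*b + (-b/c)^2*c" by (rule assms(1))
  also have "\<dots> = a - b^2/c" using c by (simp add: field_simps power2_eq_square)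
  finally show ?thesis using c by (simp add: field_simps)
qed

lemma psd_CS:
  fixes S :: "real^'n^'n"
  assumes "psd S"
  shows "(x \<bullet> (S *v y))^2 \<le> qf S x * qf S y"
proof -
  have t: "transpose S = S" using assms by (simp add: psd_def)
  have "\<And>t. 0 \<le> qf S x + 2*t*(x \<bullet> (S *v y)) + t^2 * qf S y"
    using qf_add[OF t] assms by (metis psd_def qf_def)
  moreover have "qf S y \<ge> 0" using assms by (simp add: psd_def qf_def)
  ultimately show ?thesis by (rule quad_disc)
qed

lemma qf_scale: "qf S (c *\<^sub>R x) = c^2 * qf S x"
  by (simp add: qf_def matrix_vector_mult_scaleR power2_eq_square)

lemma exists_max:
  fixes S :: "real^'n^'n"
  shows "\<exists>u. norm u = 1 \<and> (\<forall>v. qf S v \<le> qf S u * (norm v)^2)"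
proof -
  have ne: "sphere (0::real^'n) 1 \<noteq> {}"
  proof -
    obtain i :: 'n where True by simp
    have "axis i (1::real) \<in> sphere 0 1" by (simp add: norm_axis_1 sphere_def dist_norm)
    thus ?thesis by blast
  qed
  have "continuous_on (sphere 0 1) (\<lambda>x::real^'n. qf S x)"
    unfolding qf_def
    by (intro continuous_intros matrix_vector_mult_linear_continuous_on)
  then obtain u where u: "u \<in> sphere 0 1" "\<And>v. v \<in> sphere 0 1 \<Longrightarrow> qf S v \<le> qf S u"
    using continuous_attains_sup[OF compact_sphere ne] by blast
  have "qf S v \<le> qf S u * (norm v)^2" for v
  proof (cases "v = 0")
    case True thus ?thesis by (simp add: qf_def)
  next
    case False
    hence "qf S ((1/norm v) *\<^sub>R v) \<le> qf S u" by (intro u(2)) (simp add: sphere_def dist_norm)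
    hence "(1/norm v)^2 * qf S v \<le> qf S u" by (simp add: qf_scale)
    thus ?thesis using False by (simp add: field_simps power2_eq_square)
  qed
  moreover have "norm u = 1" using u by (simp add: sphere_def dist_norm)
  ultimately show ?thesis by blast
qed

lemma eigen_max:
  fixes S :: "real^'n^'n"
  assumes "psd S" "norm u = 1" "\<And>v. qf S v \<le> qf S u * (norm v)^2"
  shows "S *v u = qf S u *\<^sub>R u"
proof -
  have t: "transpose S = S" using assms by (simp add: psd_def)
  define M where "M = qf S u"
  have key: "y \<bullet> (S *v u) = M * (u \<bullet> y)" for y
  proof -
    have "\<And>t. 0 \<le> 0 + 2*t*(M * (u \<bullet> y) - u \<bullet> (S *v y)) + t^2 * (M * (norm y)^2 - qf S y)"
    proof -
      fix t
      have "qf S (u + t *\<^sub>R y) \<le> M * (norm (u + t *\<^sub>R y))^2" using assms(3) M_def by simp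
      also have "(norm (u + t *\<^sub>R y))^2 = 1 + 2*t*(u \<bullet> y) + t^2 * (norm y)^2"
      proof -
        have uu: "u \<bullet> u = 1" using assms(2) by (metis norm_eq_sqrt_inner real_sqrt_eq_1_iff)
        show ?thesis unfolding power2_norm_eq_inner
          using uu by (simp add: inner_add_left inner_add_right algebra_simps power2_eq_square inner_commute)
      qed
      finally show "0 \<le> 0 + 2*t*(M * (u \<bullet> y) - u \<bullet> (S *v y)) + t^2 * (M * (norm y)^2 - qf S y)"
        using qf_add[OF t, of u t y] M_def by (simp add: algebra_simps)
    qed
    moreover have "M * (norm y)^2 - qf S y \<ge> 0" using assms(3)[of y] M_def by simp
    ultimately have "(M * (u \<bullet> y) - u \<bullet> (S *v y))^2 \<le> 0 * (M * (norm y)^2 - qf S y)" by (rule quad_disc)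
    hence "M * (u \<bullet> y) - u \<bullet> (S *v y) = 0" by simp
    thus ?thesis using sym_form[OF t, of u y] by simp
  qed
  define y where "y = S *v u - M *\<^sub>R u"
  have "y \<bullet> y = y \<bullet> (S *v u) - M * (y \<bullet> u)" by (simp add: y_def inner_diff_right)
  also have "\<dots> = 0" using key[of y] by (simp add: inner_commute)
  finally have "y = 0" by simp
  thus ?thesis by (simp add: y_def M_def)
qed

lemma norm_le_max:
  fixes S :: "real^'n^'n"
  assumes "psd S" "\<And>v. qf S v \<le> M * (norm v)^2"
  shows "norm (S *v x) \<le> M * norm x"
proof -
  have M0: "M \<ge> 0"
  proof -
    obtain i :: 'n where True by simp
    have "0 \<le> qf S (axis i 1)" using assms(1) by (simp add: psd_def qf_def)
    also have "\<dots> \<le> M * (norm (axis i (1::real)))^2" by (rule assms(2))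
    finally show ?thesis by (simp add: norm_axis_1)
  qed
  define y where "y = S *v x"
  have "((S *v x) \<bullet> (S *v x))^2 \<le> qf S y * qf S x"
    using psd_CS[OF assms(1), of y x] by (simp add: y_def)
  also have "\<dots> \<le> (M * (norm y)^2) * (M * (norm x)^2)"
  proof (rule mult_mono)
    show "qf S y \<le> M * (norm y)^2" "qf S x \<le> M * (norm x)^2" by (rule assms(2))+
    show "0 \<le> M * (norm y)^2" using M0 by simp
    show "0 \<le> qf S x" using assms(1) by (simp add: psd_def qf_def)
  qed
  finally have h: "((S *v x) \<bullet> (S *v x))^2 \<le> (M * (norm y)^2) * (M * (norm x)^2)" .
  have yy: "(S *v x) \<bullet> (S *v x) = (norm y)^2" by (simp add: y_def power2_norm_eq_inner)
  have h2: "(norm y)^2 * (norm y)^2 \<le> (norm y)^2 * (M * norm x)^2"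
    using h unfolding yy by (simp add: power2_eq_square mult_ac)
  have "(norm y)^2 \<le> (M * norm x)^2"
  proof (cases "y = 0")
    case False
    hence "(norm y)^2 > 0" by simp
    thus ?thesis using h2 by (metis mult_le_cancel_left_pos)
  qed simp
  hence "norm y \<le> M * norm x"
    using M0 by (simp add: power2_le_iff_abs_le)
  thus ?thesis by (simp add: y_def)
qed

lemma outer_mv: "outer w *v x = (w \<bullet> x) *\<^sub>R w"
  by (simp add: outer_def matrix_vector_mult_def inner_vec_def vec_eq_iff sum_distrib_left mult_ac)

lemma qf_outer: "qf (outer w) x = (w \<bullet> x)^2"
  by (simp add: qf_def outer_mv power2_eq_square inner_commute)

lemma transpose_outer: "transpose (outer w) = outer w"
  by (simp add: outer_def transpose_def vec_eq_iff mult.commute)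

lemma trace_outer: "trace (outer w) = (norm w)^2"
  unfolding power2_norm_eq_inner by (simp add: trace_def outer_def inner_vec_def)

lemma transpose_diff_scale: "transpose ((A::real^'n^'n) - c *\<^sub>R B) = transpose A - c *\<^sub>R transpose B"
  by (simp add: transpose_def vec_eq_iff)

lemma qf_diff: "qf (A - B) x = qf A x - qf B x"
  by (simp add: qf_def matrix_vector_mult_diff_rdistrib inner_diff_right)

lemma qf_scaleR_mat: "qf (c *\<^sub>R A) x = c * qf A x"
  by (simp add: qf_def scaleR_matrix_vector_assoc[symmetric])

lemma qf_add_mat: "qf (A + B) x = qf A x + qf B x"
  by (simp add: qf_def matrix_vector_mult_add_rdistrib inner_add_right)

lemma qf_axis: "qf S (axis i 1) = S$i$i"
  by (simp add: qf_def matrix_vector_mult_basis inner_commute[of "axis i 1"] inner_axis column_def)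

lemma psd_zero_diag:
  fixes C :: "real^'n^'n"
  assumes "psd C" "C$i$i = 0"
  shows "C$j$i = 0"
proof -
  have "(axis j 1 \<bullet> (C *v axis i 1))^2 \<le> qf C (axis j 1) * qf C (axis i 1)"
    by (rule psd_CS[OF assms(1)])
  also have "\<dots> = 0" using assms(2) by (simp add: qf_axis)
  finally show ?thesis
    by (simp add: matrix_vector_mult_basis inner_commute[of "axis j 1"] inner_axis column_def)
qed

lemma psd_decomp_aux:
  fixes C :: "real^'n^'n"
  assumes "finite I"
  shows "psd C \<Longrightarrow> (\<forall>i j. i \<notin> I \<or> j \<notin> I \<longrightarrow> C$i$j = 0) \<Longrightarrow> \<exists>ws. C = sum_list (map outer ws)"
  using assms
proof (induction I arbitrary: C rule: finite_induct)
  case empty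
  hence "C = 0" by (simp add: vec_eq_iff)
  thus ?case by (intro exI[of _ "[]"]) simp
next
  case (insert i I)
  have t: "transpose C = C" using insert.prems by (simp add: psd_def)
  show ?case
  proof (cases "C$i$i = 0")
    case True
    have col: "C$j$i = 0" for j by (rule psd_zero_diag[OF insert.prems(1) True])
    have row: "C$i$j = 0" for j
    proof -
      have "transpose C $ i $ j = C $ j $ i" by (simp add: transpose_def)
      thus ?thesis using col[of j] t by simp
    qed
    have "\<forall>a b. a \<notin> I \<or> b \<notin> I \<longrightarrow> C$a$b = 0"
    proof (intro allI impI)
      fix a b assume ab: "a \<notin> I \<or> b \<notin> I"
      show "C$a$b = 0"
      proof (cases "a = i \<or> b = i")
        case True thus ?thesis using col row by auto
      next
        case False thus ?thesis using ab insert.prems(2) by auto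
      qed
    qed
    thus ?thesis using insert.IH insert.prems(1) by blast
  next
    case False
    have pos: "C$i$i > 0"
    proof -
      have "0 \<le> qf C (axis i 1)" using insert.prems(1) by (simp add: psd_def qf_def)
      thus ?thesis using False by (simp add: qf_axis)
    qed
    define c where "c = column i C"
    define C' where "C' = C - (1 / C$i$i) *\<^sub>R outer c"
    have cx: "c \<bullet> x = axis i 1 \<bullet> (C *v x)" for x
    proof -
      have "c \<bullet> x = (x v* C) $ i"
        by (simp add: c_def column_def inner_vec_def vector_matrix_mult_def mult.commute)
      also have "\<dots> = (C *v x) $ i" using vector_transpose_matrix[of x C] t by simp
      finally show ?thesis by (simp add: inner_commute[of "axis i 1"] inner_axis)
    qed
    have psd': "psd C'"
      unfolding psd_def
    proof
      show "transpose C' = C'"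
        unfolding C'_def transpose_diff_scale transpose_outer t ..
      show "\<forall>x. 0 \<le> x \<bullet> (C' *v x)"
      proof
        fix x
        have "(c \<bullet> x)^2 \<le> qf C (axis i 1) * qf C x"
          unfolding cx by (rule psd_CS[OF insert.prems(1)])
        hence "(c \<bullet> x)^2 \<le> C$i$i * qf C x" by (simp add: qf_axis)
        hence "0 \<le> qf C x - (1 / C$i$i) * (c \<bullet> x)^2"
          using pos by (simp add: field_simps)
        thus "0 \<le> x \<bullet> (C' *v x)"
          by (simp add: C'_def qf_diff qf_scaleR_mat qf_outer flip: qf_def)
      qed
    qed
    have zero': "\<forall>a b. a \<notin> I \<or> b \<notin> I \<longrightarrow> C'$a$b = 0"
    proof (intro allI impI)
      fix a b assume ab: "a \<notin> I \<or> b \<notin> I"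
      have ci: "c$k = C$k$i" for k by (simp add: c_def column_def)
      have Cik: "C$i$k = C$k$i" for k
      proof -
        have "transpose C $ i $ k = C $ k $ i" by (simp add: transpose_def)
        thus ?thesis using t by simp
      qed
      have C'ab: "C'$a$b = C$a$b - (1 / C$i$i) * (C$a$i * C$b$i)"
        by (simp add: C'_def outer_def ci)
      show "C'$a$b = 0"
      proof (cases "a = i")
        case True
        thus ?thesis using pos Cik[of b] C'ab by simp
      next
        case ai: False
        show ?thesis
        proof (cases "b = i")
          case True
          thus ?thesis using pos C'ab by simp
        next
          case False
          hence "a \<notin> insert i I \<or> b \<notin> insert i I" using ab ai by auto
          hence "C$a$b = 0" "C$a$i = 0 \<or> C$b$i = 0" using insert.prems(2) by auto
          thus ?thesis using C'ab by auto
        qed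
      qed
    qed
    obtain ws where ws: "C' = sum_list (map outer ws)"
      using insert.IH[OF psd' zero'] by blast
    define w where "w = (1 / sqrt (C$i$i)) *\<^sub>R c"
    have "outer w = (1 / C$i$i) *\<^sub>R outer c"
      using pos by (simp add: w_def outer_def vec_eq_iff power2_eq_square real_sqrt_mult[symmetric])
    hence "C = sum_list (map outer (w # ws))"
      by (simp add: ws[symmetric] C'_def)
    thus ?thesis by blast
  qed
qed

lemma psd_decomp:
  fixes C :: "real^'n^'n"
  assumes "psd C"
  shows "\<exists>ws. C = sum_list (map outer ws)"
  using psd_decomp_aux[of UNIV C] assms by simp

lemma W2_lower:
  fixes \<nu>1 \<nu>2 :: "real measure" and g h :: "real \<Rightarrow> real"
  assumes "AE x in \<nu>1. x \<in> S1" "AE y in \<nu>2. y \<in> S2"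
    and ig: "integrable \<nu>1 g" and ih: "integrable \<nu>2 h"
    and s1: "sets \<nu>1 = sets borel" and s2: "sets \<nu>2 = sets borel"
    and gb: "g \<in> borel_measurable borel" and hb: "h \<in> borel_measurable borel"
    and pt: "\<And>x y. x \<in> S1 \<Longrightarrow> y \<in> S2 \<Longrightarrow> g x - h y \<le> (x - y)^2"
  shows "ennreal ((\<integral>x. g x \<partial>\<nu>1) - (\<integral>y. h y \<partial>\<nu>2)) \<le> W2_sq \<nu>1 \<nu>2"
  unfolding W2_sq_def
proof (rule INF_greatest)
  fix \<gamma> assume "\<gamma> \<in> couplings \<nu>1 \<nu>2"
  hence sg: "sets \<gamma> = sets borel" and pg: "prob_space \<gamma>"
    and d1: "distr \<gamma> borel fst = \<nu>1" and d2: "distr \<gamma> borel snd = \<nu>2"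
    by (auto simp: couplings_def)
  interpret prob_space \<gamma> by (rule pg)
  have "fst \<in> borel_measurable (borel :: (real\<times>real) measure)"
    by (intro borel_measurable_continuous_onI continuous_on_fst continuous_on_id)
  hence mf: "fst \<in> measurable \<gamma> borel" unfolding measurable_cong_sets[OF sg refl] .
  have "snd \<in> borel_measurable (borel :: (real\<times>real) measure)"
    by (intro borel_measurable_continuous_onI continuous_on_snd continuous_on_id)
  hence ms: "snd \<in> measurable \<gamma> borel" unfolding measurable_cong_sets[OF sg refl] .
  have ig': "integrable \<gamma> (\<lambda>p. g (fst p))"
    using ig unfolding d1[symmetric] by (subst (asm) integrable_distr_eq[OF mf gb]) 
  have ih': "integrable \<gamma> (\<lambda>p. h (snd p))"
    using ih unfolding d2[symmetric] by (subst (asm) integrable_distr_eq[OF ms hb])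
  have eg: "(\<integral>x. g x \<partial>\<nu>1) = (\<integral>p. g (fst p) \<partial>\<gamma>)"
    unfolding d1[symmetric] by (rule integral_distr[OF mf gb])
  have eh: "(\<integral>x. h x \<partial>\<nu>2) = (\<integral>p. h (snd p) \<partial>\<gamma>)"
    unfolding d2[symmetric] by (rule integral_distr[OF ms hb])
  have ae1: "AE p in \<gamma>. fst p \<in> S1"
    using assms(1) unfolding d1[symmetric] by (rule AE_distrD[OF mf])
  have ae2: "AE p in \<gamma>. snd p \<in> S2"
    using assms(2) unfolding d2[symmetric] by (rule AE_distrD[OF ms])
  define F where "F = (\<lambda>p. max 0 (g (fst p) - h (snd p)))"
  have iF: "integrable \<gamma> F" unfolding F_def
    by (intro integrable_max integrable_zero Bochner_Integration.integrable_diff ig' ih')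
  have "(\<integral>x. g x \<partial>\<nu>1) - (\<integral>y. h y \<partial>\<nu>2) = (\<integral>p. g (fst p) - h (snd p) \<partial>\<gamma>)"
    using eg eh ig' ih' by simp
  also have "\<dots> \<le> (\<integral>p. F p \<partial>\<gamma>)"
    by (intro integral_mono Bochner_Integration.integrable_diff ig' ih' iF) (simp add: F_def)
  finally have "ennreal ((\<integral>x. g x \<partial>\<nu>1) - (\<integral>y. h y \<partial>\<nu>2)) \<le> ennreal (\<integral>p. F p \<partial>\<gamma>)"
    by (rule ennreal_leI)
  also have "ennreal (\<integral>p. F p \<partial>\<gamma>) = (\<integral>\<^sup>+p. ennreal (F p) \<partial>\<gamma>)"
    by (rule nn_integral_eq_integral[symmetric, OF iF]) (simp add: F_def)
  also have "\<dots> \<le> (\<integral>\<^sup>+p. ennreal ((fst p - snd p)^2) \<partial>\<gamma>)"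
  proof (rule nn_integral_mono_AE)
    show "AE p in \<gamma>. ennreal (F p) \<le> ennreal ((fst p - snd p)^2)"
      using ae1 ae2 by eventually_elim (auto simp: F_def intro!: ennreal_leI pt)
  qed
  finally show "ennreal ((\<integral>x. g x \<partial>\<nu>1) - (\<integral>y. h y \<partial>\<nu>2)) \<le> (\<integral>\<^sup>+p. ennreal ((fst p - snd p)^2) \<partial>\<gamma>)" .
qed

lemma PiM_prob: "prob_space M \<Longrightarrow> prob_space (PiM I (\<lambda>_. M))"
  by (intro prob_space_PiM) auto

lemma S_bound:
  fixes n :: nat and f :: "'a \<Rightarrow> real"
  assumes "\<forall>x\<in>space M. \<bar>f x\<bar> \<le> 1" "X \<in> space (PiM {..<n} (\<lambda>_. M))"
  shows "\<bar>\<Sum>i<n. f (X i)\<bar> \<le> real n"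
proof -
  have "\<bar>\<Sum>i<n. f (X i)\<bar> \<le> (\<Sum>i<n. \<bar>f (X i)\<bar>)" by (rule sum_abs)
  also have "\<dots> \<le> (\<Sum>i<n. 1)"
    using assms by (intro sum_mono) (auto simp: space_PiM PiE_iff)
  finally show ?thesis by simp
qed

lemma S_meas:
  fixes n :: nat and f :: "'a \<Rightarrow> real"
  assumes "f \<in> borel_measurable M"
  shows "(\<lambda>X. \<Sum>i<n. f (X i)) \<in> borel_measurable (PiM {..<n} (\<lambda>_. M))"
proof (intro borel_measurable_sum)
  fix i assume "i \<in> {..<n}"
  thus "(\<lambda>X. f (X i)) \<in> borel_measurable (PiM {..<n} (\<lambda>_. M))"
    using measurable_compose[OF measurable_component_singleton[of i "{..<n}" "\<lambda>_. M"] assms] by simp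
qed

lemma S_pow_integrable:
  fixes n :: nat and f :: "'a \<Rightarrow> real"
  assumes "prob_space M" "f \<in> borel_measurable M" "\<forall>x\<in>space M. \<bar>f x\<bar> \<le> 1"
  shows "integrable (PiM {..<n} (\<lambda>_. M)) (\<lambda>X. (\<Sum>i<n. f (X i))^k)"
proof -
  interpret P: prob_space "PiM {..<n} (\<lambda>_. M)" by (rule PiM_prob[OF assms(1)])
  show ?thesis
  proof (rule finite_measure.integrable_const_bound[where B="real n ^ k"])
    show "finite_measure (PiM {..<n} (\<lambda>_. M))" by (rule P.finite_measure_axioms)
    show "AE X in PiM {..<n} (\<lambda>_. M). norm ((\<Sum>i<n. f (X i))^k) \<le> real n ^ k"
    proof (rule AE_I2)
      fix X assume "X \<in> space (PiM {..<n} (\<lambda>_. M))"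
      hence "\<bar>\<Sum>i<n. f (X i)\<bar> \<le> real n" using S_bound[where M=M and f=f and n=n and X=X] assms(3) by blast
      thus "norm ((\<Sum>i<n. f (X i))^k) \<le> real n ^ k" by (simp add: power_abs power_mono)
    qed
    show "(\<lambda>X. (\<Sum>i<n. f (X i))^k) \<in> borel_measurable (PiM {..<n} (\<lambda>_. M))"
      using S_meas[OF assms(2), of n] by measurable
  qed
qed

lemma step:
  fixes n :: nat and f :: "'a \<Rightarrow> real"
  assumes pM: "prob_space M" and fm: "f \<in> borel_measurable M"
    and fb: "\<forall>x\<in>space M. \<bar>f x\<bar> \<le> 1"
  shows "(\<integral>X. (\<Sum>i<Suc n. f (X i))^k \<partial>PiM {..<Suc n} (\<lambda>_. M))
       = (\<integral>X. (\<integral>y. ((\<Sum>i<n. f (X i)) + f y)^k \<partial>M) \<partial>PiM {..<n} (\<lambda>_. M))"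
proof -
  interpret product_sigma_finite "\<lambda>_::nat. M"
    by (simp add: product_sigma_finite_def prob_space_imp_sigma_finite pM)
  have e: "{..<Suc n} = insert n {..<n}" by auto
  have int: "integrable (PiM (insert n {..<n}) (\<lambda>_. M)) (\<lambda>X. (\<Sum>i<Suc n. f (X i))^k)"
    using S_pow_integrable[OF pM fm fb, of "Suc n" k] unfolding e .
  define F where "F = (\<lambda>X. (\<Sum>i<Suc n. f (X i))^k)"
  have "(\<integral>X. F X \<partial>PiM (insert n {..<n}) (\<lambda>_. M))
      = (\<integral>X. (\<integral>y. F (X(n:=y)) \<partial>M) \<partial>PiM {..<n} (\<lambda>_. M))"
    by (rule product_integral_insert) (use int in \<open>auto simp: F_def\<close>)
  also have "\<dots> = (\<integral>X. (\<integral>y. ((\<Sum>i<n. f (X i)) + f y)^k \<partial>M) \<partial>PiM {..<n} (\<lambda>_. M))"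
  proof (intro Bochner_Integration.integral_cong refl)
    fix X y
    have "(\<Sum>i<n. f ((X(n:=y)) i)) = (\<Sum>i<n. f (X i))" by (intro sum.cong) auto
    thus "F (X(n:=y)) = ((\<Sum>i<n. f (X i)) + f y)^k" by (simp add: F_def)
  qed
  finally show ?thesis unfolding F_def e .
qed

lemma int_poly4:
  fixes g :: "'a \<Rightarrow> real"
  assumes pN: "prob_space N" and gm: "g \<in> borel_measurable N"
    and gb: "\<forall>x\<in>space N. \<bar>g x\<bar> \<le> B"
  shows "(\<integral>x. a + b * g x + c * (g x)^2 + d * (g x)^3 + e * (g x)^4 \<partial>N)
     = a + b * (\<integral>x. g x \<partial>N) + c * (\<integral>x. (g x)^2 \<partial>N) + d * (\<integral>x. (g x)^3 \<partial>N) + e * (\<integral>x. (g x)^4 \<partial>N)"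
proof -
  interpret prob_space N by (rule pN)
  have I: "integrable N (\<lambda>x. (g x)^j)" for j
  proof (rule integrable_const_bound[where B="\<bar>B\<bar>^j"])
    have "\<bar>g x\<bar> \<le> \<bar>B\<bar>" if "x \<in> space N" for x using gb that by fastforce
    thus "AE x in N. norm ((g x)^j) \<le> \<bar>B\<bar>^j"
      by (intro AE_I2) (auto simp: power_abs intro!: power_mono)
    show "(\<lambda>x. (g x)^j) \<in> borel_measurable N" using gm by measurable
  qed
  have I1: "integrable N g" using I[of 1] by simp
  show ?thesis
    using I I1 by (simp add: integral_add integral_mult_right_zero prob_space)
qed

lemma inner_int:
  fixes f :: "'a \<Rightarrow> real"
  assumes pM: "prob_space M" and fm: "f \<in> borel_measurable M"
    and fb: "\<forall>x\<in>space M. \<bar>f x\<bar> \<le> 1" and f0: "(\<integral>x. f x \<partial>M) = 0"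
  shows "(\<integral>y. (s + f y)^1 \<partial>M) = s"
    and "(\<integral>y. (s + f y)^2 \<partial>M) = s^2 + (\<integral>y. (f y)^2 \<partial>M)"
    and "(\<integral>y. (s + f y)^4 \<partial>M) = s^4 + 6 * s^2 * (\<integral>y. (f y)^2 \<partial>M)
            + 4 * s * (\<integral>y. (f y)^3 \<partial>M) + (\<integral>y. (f y)^4 \<partial>M)"
proof -
  note P = int_poly4[OF pM fm fb]
  have "(\<integral>y. (s + f y)^1 \<partial>M) = (\<integral>y. s + 1 * f y + 0 * (f y)^2 + 0 * (f y)^3 + 0 * (f y)^4 \<partial>M)"
    by simp
  also have "\<dots> = s" by (subst P) (simp add: f0)
  finally show "(\<integral>y. (s + f y)^1 \<partial>M) = s" .
  have "(\<integral>y. (s + f y)^2 \<partial>M) = (\<integral>y. s^2 + (2 * s) * f y + 1 * (f y)^2 + 0 * (f y)^3 + 0 * (f y)^4 \<partial>M)"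
    by (intro Bochner_Integration.integral_cong refl) (simp add: power2_eq_square algebra_simps)
  also have "\<dots> = s^2 + (\<integral>y. (f y)^2 \<partial>M)" by (subst P) (simp add: f0)
  finally show "(\<integral>y. (s + f y)^2 \<partial>M) = s^2 + (\<integral>y. (f y)^2 \<partial>M)" .
  have "(\<integral>y. (s + f y)^4 \<partial>M) = (\<integral>y. s^4 + (4 * s^3) * f y + (6 * s^2) * (f y)^2 + (4 * s) * (f y)^3 + 1 * (f y)^4 \<partial>M)"
    by (intro Bochner_Integration.integral_cong refl) algebra
  also have "\<dots> = s^4 + 6 * s^2 * (\<integral>y. (f y)^2 \<partial>M) + 4 * s * (\<integral>y. (f y)^3 \<partial>M) + (\<integral>y. (f y)^4 \<partial>M)"
    by (subst P) (simp add: f0)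
  finally show "(\<integral>y. (s + f y)^4 \<partial>M) = s^4 + 6 * s^2 * (\<integral>y. (f y)^2 \<partial>M)
            + 4 * s * (\<integral>y. (f y)^3 \<partial>M) + (\<integral>y. (f y)^4 \<partial>M)" .
qed

lemma moments:
  fixes f :: "'a \<Rightarrow> real" and n :: nat
  assumes pM: "prob_space M" and fm: "f \<in> borel_measurable M"
    and fb: "\<forall>x\<in>space M. \<bar>f x\<bar> \<le> 1" and f0: "(\<integral>x. f x \<partial>M) = 0"
  defines "m2 \<equiv> (\<integral>y. (f y)^2 \<partial>M)" and "m4 \<equiv> (\<integral>y. (f y)^4 \<partial>M)"
  shows "(\<integral>X. (\<Sum>i<n. f (X i)) \<partial>PiM {..<n} (\<lambda>_. M)) = 0 \<and>
         (\<integral>X. (\<Sum>i<n. f (X i))^2 \<partial>PiM {..<n} (\<lambda>_. M)) = real n * m2 \<and>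
         (\<integral>X. (\<Sum>i<n. f (X i))^4 \<partial>PiM {..<n} (\<lambda>_. M)) = real n * m4 + 3 * real n * (real n - 1) * m2^2"
proof (induction n)
  case 0
  interpret prob_space "PiM {..<0::nat} (\<lambda>_. M)" by (rule PiM_prob[OF pM])
  show ?case by simp
next
  case (Suc n)
  note IH = Suc.IH
  interpret P: prob_space "PiM {..<n} (\<lambda>_. M)" by (rule PiM_prob[OF pM])
  let ?S = "\<lambda>X. \<Sum>i<n. f (X i)"
  have SB: "\<forall>X\<in>space (PiM {..<n} (\<lambda>_. M)). \<bar>?S X\<bar> \<le> real n"
    using S_bound[where M=M and f=f and n=n] fb by blast
  note Q = int_poly4[OF PiM_prob[OF pM] S_meas[OF fm] SB]
  note R = inner_int[OF pM fm fb f0]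
  have m3: "(\<integral>y. (f y)^3 \<partial>M) = (\<integral>y. (f y)^3 \<partial>M)" ..
  have a1: "(\<integral>X. ?S X \<partial>PiM {..<n} (\<lambda>_. M)) = 0" using IH by simp
  have a2: "(\<integral>X. (?S X)^2 \<partial>PiM {..<n} (\<lambda>_. M)) = real n * m2" using IH by simp
  have a4: "(\<integral>X. (?S X)^4 \<partial>PiM {..<n} (\<lambda>_. M)) = real n * m4 + 3 * real n * (real n - 1) * m2^2" using IH by simp
  have e1: "(\<integral>X. (\<Sum>i<Suc n. f (X i))^1 \<partial>PiM {..<Suc n} (\<lambda>_. M)) = 0"
  proof -
    have "(\<integral>X. (\<Sum>i<Suc n. f (X i))^1 \<partial>PiM {..<Suc n} (\<lambda>_. M))
        = (\<integral>X. ?S X + 0 * (?S X)^2 + 0 * (?S X)^3 + 0 * (?S X)^4 + 0 * (?S X)^4 \<partial>PiM {..<n} (\<lambda>_. M))"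
      unfolding step[OF pM fm fb] R by simp
    also have "\<dots> = (\<integral>X. 0 + 1 * ?S X + 0 * (?S X)^2 + 0 * (?S X)^3 + 0 * (?S X)^4 \<partial>PiM {..<n} (\<lambda>_. M))"
      by simp
    also have "\<dots> = 0" by (subst Q) (use a1 in simp)
    finally show ?thesis .
  qed
  have e2: "(\<integral>X. (\<Sum>i<Suc n. f (X i))^2 \<partial>PiM {..<Suc n} (\<lambda>_. M)) = real (Suc n) * m2"
  proof -
    have "(\<integral>X. (\<Sum>i<Suc n. f (X i))^2 \<partial>PiM {..<Suc n} (\<lambda>_. M))
        = (\<integral>X. m2 + 0 * ?S X + 1 * (?S X)^2 + 0 * (?S X)^3 + 0 * (?S X)^4 \<partial>PiM {..<n} (\<lambda>_. M))"
      unfolding step[OF pM fm fb] R m2_def by (simp add: add.commute)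
    also have "\<dots> = real (Suc n) * m2" by (subst Q) (use a2 in \<open>simp add: algebra_simps\<close>)
    finally show ?thesis .
  qed
  have e4: "(\<integral>X. (\<Sum>i<Suc n. f (X i))^4 \<partial>PiM {..<Suc n} (\<lambda>_. M)) = real (Suc n) * m4 + 3 * real (Suc n) * (real (Suc n) - 1) * m2^2"
  proof -
    have "(\<integral>X. (\<Sum>i<Suc n. f (X i))^4 \<partial>PiM {..<Suc n} (\<lambda>_. M))
        = (\<integral>X. m4 + (4 * (\<integral>y. (f y)^3 \<partial>M)) * ?S X + (6 * m2) * (?S X)^2 + 0 * (?S X)^3 + 1 * (?S X)^4 \<partial>PiM {..<n} (\<lambda>_. M))"
      unfolding step[OF pM fm fb] R m2_def m4_def
      by (intro Bochner_Integration.integral_cong refl) (simp add: algebra_simps)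
    also have "\<dots> = m4 + 6 * m2 * (real n * m2) + (real n * m4 + 3 * real n * (real n - 1) * m2^2)"
      by (subst Q) (use a1 a2 a4 in simp)
    also have "\<dots> = real (Suc n) * m4 + 3 * real (Suc n) * (real (Suc n) - 1) * m2^2"
      by (cases n) (simp_all add: algebra_simps power2_eq_square)
    finally show ?thesis .
  qed
  show ?case using e1 e2 e4 by simp
qed

definition symL :: "real \<Rightarrow> ('a::real_vector \<times> real) list \<Rightarrow> ('a \<times> real) list" where
  "symL r L = concat (map (\<lambda>(a,w). [(r *\<^sub>R a, w/2), (-(r *\<^sub>R a), w/2)]) L)"

definition muL :: "real \<Rightarrow> ('a::euclidean_space \<times> real) list \<Rightarrow> 'a measure" where
  "muL r L = distr (measure_pmf (pmf_of_list (symL r L))) borel (\<lambda>x. x)"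

definition wfL :: "('a \<times> real) list \<Rightarrow> bool" where
  "wfL L \<longleftrightarrow> (\<forall>z\<in>set L. snd z \<ge> 0) \<and> sum_list (map snd L) = 1"

lemma sum_list_symL_snd: "sum_list (map snd (symL r L)) = sum_list (map snd L)"
  by (induction L) (auto simp: symL_def)

lemma set_symL: "set (symL r L) = (\<Union>(a,w)\<in>set L. {(r *\<^sub>R a, w/2), (-(r *\<^sub>R a), w/2)})"
  by (induction L) (auto simp: symL_def)

lemma wf_symL: "wfL L \<Longrightarrow> pmf_of_list_wf (symL r L)"
  unfolding pmf_of_list_wf_def wfL_def
  by (auto simp: sum_list_symL_snd set_symL)

lemma sum_weighted_filter:
  fixes f :: "'a \<Rightarrow> real"
  assumes "finite A" "fst ` set L \<subseteq> A"
  shows "(\<Sum>a\<in>A. f a * sum_list (map snd (filter (\<lambda>z. fst z = a) L))) = (\<Sum>(x,w)\<leftarrow>L. w * f x)"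
  using assms(2)
proof (induction L)
  case Nil thus ?case by simp
next
  case (Cons z L)
  obtain x w where z: "z = (x,w)" by (cases z)
  have xA: "x \<in> A" using Cons.prems z by auto
  have "(\<Sum>a\<in>A. f a * sum_list (map snd (filter (\<lambda>z. fst z = a) (z # L))))
      = (\<Sum>a\<in>A. (if a = x then f a * w else 0) + f a * sum_list (map snd (filter (\<lambda>z. fst z = a) L)))"
    by (intro sum.cong) (auto simp: z algebra_simps)
  also have "\<dots> = f x * w + (\<Sum>(x,w)\<leftarrow>L. w * f x)"
    using Cons assms(1) xA by (simp add: sum.distrib)
  finally show ?case by (simp add: z mult.commute)
qed

lemma integral_pmf_of_list:
  fixes f :: "'a \<Rightarrow> real"
  assumes "pmf_of_list_wf L"
  shows "(\<integral>x. f x \<partial>measure_pmf (pmf_of_list L)) = (\<Sum>(x,w)\<leftarrow>L. w * f x)"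
proof -
  have "(\<integral>x. f x \<partial>measure_pmf (pmf_of_list L)) = (\<Sum>a\<in>set (map fst L). f a * pmf (pmf_of_list L) a)"
    using set_pmf_of_list[OF assms] by (intro integral_measure_pmf_real) auto
  also have "\<dots> = (\<Sum>a\<in>set (map fst L). f a * sum_list (map snd (filter (\<lambda>z. fst z = a) L)))"
    by (simp add: pmf_pmf_of_list[OF assms])
  also have "\<dots> = (\<Sum>(x,w)\<leftarrow>L. w * f x)" by (rule sum_weighted_filter) auto
  finally show ?thesis .
qed

lemma sum_symL:
  fixes f :: "'a::real_vector \<Rightarrow> real"
  shows "(\<Sum>(x,w)\<leftarrow>symL r L. w * f x) = (\<Sum>(a,w)\<leftarrow>L. w/2 * (f (r *\<^sub>R a) + f (-(r *\<^sub>R a))))"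
  by (induction L) (auto simp: symL_def algebra_simps)

lemma muL_prob: "wfL L \<Longrightarrow> prob_space (muL r L)"
  unfolding muL_def by (intro prob_space.prob_space_distr measure_pmf.prob_space_axioms) simp

lemma muL_sets: "sets (muL r L) = sets borel"
  by (simp add: muL_def)

lemma muL_integral:
  fixes f :: "'a::euclidean_space \<Rightarrow> real"
  assumes "wfL L" "f \<in> borel_measurable borel"
  shows "(\<integral>x. f x \<partial>muL r L) = (\<Sum>(a,w)\<leftarrow>L. w/2 * (f (r *\<^sub>R a) + f (-(r *\<^sub>R a))))"
proof -
  have "(\<integral>x. f x \<partial>muL r L) = (\<integral>x. f x \<partial>measure_pmf (pmf_of_list (symL r L)))"
    unfolding muL_def by (subst integral_distr) (use assms in auto)
  also have "\<dots> = (\<Sum>(x,w)\<leftarrow>symL r L. w * f x)" by (rule integral_pmf_of_list[OF wf_symL[OF assms(1)]])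
  finally show ?thesis by (simp add: sum_symL)
qed

lemma muL_integrable:
  fixes f :: "'a::euclidean_space \<Rightarrow> real"
  assumes "wfL L" "f \<in> borel_measurable borel"
  shows "integrable (muL r L) f"
  unfolding muL_def
  by (subst integrable_distr_eq) (use assms finite_set_pmf_of_list[OF wf_symL[OF assms(1)]] in
      \<open>auto intro: integrable_measure_pmf_finite\<close>)

lemma muL_AE:
  fixes L :: "('a::euclidean_space \<times> real) list"
  assumes "wfL L"
  shows "AE x in muL r L. x \<in> fst ` set (symL r L)"
proof -
  have fin: "finite (fst ` set (symL r L))" by simp
  have "{x \<in> space borel. x \<in> fst ` set (symL r L)} \<in> sets borel"
    using fin by (simp add: finite_imp_closed borel_closed)
  hence "(AE x in muL r L. x \<in> fst ` set (symL r L)) \<longleftrightarrow>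
       (AE x in measure_pmf (pmf_of_list (symL r L)). x \<in> fst ` set (symL r L))"
    unfolding muL_def by (intro AE_distr_iff) auto
  also have "\<dots>" using set_pmf_of_list[OF wf_symL[OF assms]]
    by (auto simp: AE_measure_pmf_iff)
  finally show ?thesis .
qed

lemma filter_symL:
  "sum_list (map snd (filter (\<lambda>x. fst x \<in> A) (symL r L)))
   = (\<Sum>(a,w)\<leftarrow>L. w/2 * (indicator A (r *\<^sub>R a) + indicator A (-(r *\<^sub>R a))))"
  by (induction L) (auto simp: symL_def indicator_def algebra_simps)

lemma uminus_image_iff: "(x::'a::real_vector) \<in> uminus ` A \<longleftrightarrow> -x \<in> A"
  by (metis add.inverse_inverse image_iff)

lemma muL_symmetric:
  fixes L :: "('a::euclidean_space \<times> real) list"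
  assumes "wfL L"
  shows "symmetric_measure (muL r L)"
  unfolding symmetric_measure_def
proof
  fix A :: "'a set" assume A: "A \<in> sets borel"
  have "uminus ` A = (\<lambda>x. -x) -` A \<inter> space borel"
    by (auto simp: uminus_image_iff)
  moreover have "(\<lambda>x::'a. -x) \<in> borel_measurable borel"
    by (intro borel_measurable_continuous_onI continuous_intros)
  ultimately have A': "uminus ` A \<in> sets borel" using A by (metis measurable_sets)
  have wf: "pmf_of_list_wf (symL r L)" by (rule wf_symL[OF assms])
  have e: "emeasure (muL r L) B = ennreal (\<Sum>(a,w)\<leftarrow>L. w/2 * (indicator B (r *\<^sub>R a) + indicator B (-(r *\<^sub>R a))))"
    if "B \<in> sets borel" for B
    unfolding muL_def using that
    by (simp add: emeasure_distr emeasure_pmf_of_list[OF wf] filter_symL)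
  show "emeasure (muL r L) A = emeasure (muL r L) (uminus ` A)"
    unfolding e[OF A] e[OF A']
    by (intro arg_cong[where f=ennreal] arg_cong[where f=sum_list] map_cong refl)
       (auto simp: indicator_def uminus_image_iff)
qed

lemma PiM_AE_all:
  fixes n :: nat
  assumes "prob_space M" "AE x in M. x \<in> S"
  shows "AE X in PiM {..<n} (\<lambda>_. M). \<forall>i\<in>{..<n}. X i \<in> S"
  by (intro AE_finite_allI finite_lessThan AE_PiM_component[where M="\<lambda>_. M"]) (use assms in auto)

lemma sum_set_mset_count:
  fixes g :: "'a \<Rightarrow> real"
  shows "(\<Sum>a\<in>set_mset M. g a * real (count M a)) = sum_mset (image_mset g M)"
proof (induction M)
  case empty thus ?case by simp
next
  case (add x M)
  have "(\<Sum>a\<in>set_mset (add_mset x M). g a * real (count (add_mset x M) a))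
      = (\<Sum>a\<in>insert x (set_mset M). g a * real (count M a) + (if a = x then g x else 0))"
    by (intro sum.cong) (auto simp: algebra_simps)
  also have "\<dots> = (\<Sum>a\<in>insert x (set_mset M). g a * real (count M a)) + g x"
    by (simp add: sum.distrib)
  also have "(\<Sum>a\<in>insert x (set_mset M). g a * real (count M a)) = (\<Sum>a\<in>set_mset M. g a * real (count M a))"
    by (cases "x \<in> set_mset M") (auto simp: insert_absorb not_in_iff)
  finally show ?case using add by simp
qed

definition empMS :: "(nat \<Rightarrow> 'a::real_vector) \<Rightarrow> nat \<Rightarrow> 'a multiset" where
  "empMS X n = image_mset X (mset_set {..<n}) + image_mset (\<lambda>i. - X i) (mset_set {..<n})"

lemma empMS_ne: "n \<ge> 1 \<Longrightarrow> empMS X n \<noteq> {#}"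
proof -
  assume "n \<ge> 1"
  hence "0 \<in> {..<n}" by simp
  thus ?thesis by (auto simp: empMS_def mset_set_empty_iff)
qed

lemma size_empMS: "size (empMS X n) = 2 * n"
  by (simp add: empMS_def)

lemma set_empMS: "set_mset (empMS X n) = X ` {..<n} \<union> (\<lambda>i. - X i) ` {..<n}"
  by (simp add: empMS_def)

lemma sym_emp_eq: "sym_empirical X n = measure_pmf (pmf_of_multiset (empMS X n))"
  by (simp add: sym_empirical_def empMS_def)

lemma emp_integral:
  fixes X :: "nat \<Rightarrow> 'a::euclidean_space" and h :: "real \<Rightarrow> real"
  assumes n: "n \<ge> 1" and hm: "h \<in> borel_measurable borel" and he: "\<And>t. h (-t) = h t"
  shows "(\<integral>y. h y \<partial>distr (sym_empirical X n) borel (\<lambda>x. x \<bullet> v)) = (\<Sum>i<n. h (X i \<bullet> v)) / n"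
proof -
  let ?M = "empMS X n"
  have ne: "?M \<noteq> {#}" by (rule empMS_ne[OF n])
  have "(\<integral>y. h y \<partial>distr (sym_empirical X n) borel (\<lambda>x. x \<bullet> v))
      = (\<integral>x. h (x \<bullet> v) \<partial>measure_pmf (pmf_of_multiset ?M))"
    unfolding sym_emp_eq by (subst integral_distr) (use hm in auto)
  also have "\<dots> = (\<Sum>a\<in>set_mset ?M. h (a \<bullet> v) * pmf (pmf_of_multiset ?M) a)"
    by (rule integral_measure_pmf_real) (use ne in auto)
  also have "\<dots> = (\<Sum>a\<in>set_mset ?M. h (a \<bullet> v) * real (count ?M a)) / (2 * n)"
    using ne by (simp add: size_empMS sum_divide_distrib)
  also have "(\<Sum>a\<in>set_mset ?M. h (a \<bullet> v) * real (count ?M a)) = sum_mset (image_mset (\<lambda>a. h (a \<bullet> v)) ?M)"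
    by (rule sum_set_mset_count)
  also have "\<dots> = 2 * (\<Sum>i<n. h (X i \<bullet> v))"
    using he by (simp add: empMS_def sum_unfold_sum_mset multiset.map_comp comp_def)
  finally show ?thesis using n by simp
qed

lemma emp_integrable:
  fixes X :: "nat \<Rightarrow> 'a::euclidean_space" and h :: "real \<Rightarrow> real"
  assumes n: "n \<ge> 1" and hm: "h \<in> borel_measurable borel"
  shows "integrable (distr (sym_empirical X n) borel (\<lambda>x. x \<bullet> v)) h"
  unfolding sym_emp_eq
  by (subst integrable_distr_eq) (use hm empMS_ne[OF n, of X] in \<open>auto intro!: integrable_measure_pmf_finite\<close>)

lemma emp_AE:
  fixes X :: "nat \<Rightarrow> 'a::euclidean_space"
  assumes n: "n \<ge> 1"
  shows "AE y in distr (sym_empirical X n) borel (\<lambda>x. x \<bullet> v). y \<in> (\<lambda>x. x \<bullet> v) ` set_mset (empMS X n)"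
proof -
  have fin: "finite ((\<lambda>x. x \<bullet> v) ` set_mset (empMS X n))" by simp
  have "{y \<in> space borel. y \<in> (\<lambda>x. x \<bullet> v) ` set_mset (empMS X n)} \<in> sets borel"
    using fin by (simp add: finite_imp_closed borel_closed)
  hence "(AE y in distr (sym_empirical X n) borel (\<lambda>x. x \<bullet> v). y \<in> (\<lambda>x. x \<bullet> v) ` set_mset (empMS X n))
     \<longleftrightarrow> (AE x in measure_pmf (pmf_of_multiset (empMS X n)). x \<bullet> v \<in> (\<lambda>x. x \<bullet> v) ` set_mset (empMS X n))"
    unfolding sym_emp_eq by (intro AE_distr_iff) auto
  also have "\<dots>" using empMS_ne[OF n, of X] by (auto simp: AE_measure_pmf_iff)
  finally show ?thesis .
qed

lemma emp_sets: "sets (distr (sym_empirical X n) borel (\<lambda>x. x \<bullet> v)) = sets borel"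
  by simp

lemma sum_list_outer_entry: "(sum_list (map outer ws)) $ i $ j = (\<Sum>w\<leftarrow>ws. w$i * w$j)"
  by (induction ws) (simp_all add: outer_def)

lemma qf_zero_mat: "qf 0 x = 0"
  by (simp add: qf_def)

lemma qf_sum_list_outer: "qf (sum_list (map outer ws)) x = (\<Sum>w\<leftarrow>ws. (w \<bullet> x)^2)"
  by (induction ws) (simp_all add: qf_add_mat qf_outer qf_zero_mat)

lemma trace_zero_mat: "trace (0::real^'n^'n) = 0"
  by (simp add: trace_def)

lemma trace_sum_list_outer: "trace (sum_list (map outer (ws :: (real^'n) list))) = (\<Sum>w\<leftarrow>ws. (norm w)^2)"
  by (induction ws) (simp_all add: trace_add trace_outer trace_zero_mat)

lemma sum_list_nonneg_zero:
  fixes f :: "'a \<Rightarrow> real"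
  assumes "\<forall>x\<in>set xs. 0 \<le> f x" "sum_list (map f xs) = 0"
  shows "\<forall>x\<in>set xs. f x = 0"
  using assms
proof (induction xs)
  case (Cons a xs)
  have "0 \<le> sum_list (map f xs)" using Cons.prems(1) by (intro sum_list_nonneg) auto
  moreover have "0 \<le> f a" using Cons.prems(1) by simp
  moreover have "f a + sum_list (map f xs) = 0" using Cons.prems(2) by simp
  ultimately have fa: "f a = 0" and s0: "sum_list (map f xs) = 0" by linarith+
  have "\<forall>x\<in>set xs. 0 \<le> f x" using Cons.prems(1) by simp
  hence "\<forall>x\<in>set xs. f x = 0" using Cons.IH s0 by blast
  thus ?case using fa by simp
qed simp

lemma op_norm_eq:
  fixes S :: "real^'n^'n"
  assumes "psd S" "norm u = 1" "\<And>v. qf S v \<le> qf S u * (norm v)^2"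
  shows "op_norm S = qf S u"
proof (rule antisym)
  show "op_norm S \<le> qf S u"
    unfolding op_norm_def by (rule onorm_le) (rule norm_le_max[OF assms(1) assms(3)])
  have "qf S u = u \<bullet> (S *v u)" by (simp add: qf_def)
  also have "\<dots> \<le> norm u * norm (S *v u)" by (rule norm_cauchy_schwarz)
  also have "\<dots> \<le> onorm ((*v) S) * norm u"
    using onorm[OF matrix_vector_mul_bounded_linear, of S u] assms(2) by simp
  finally show "qf S u \<le> op_norm S" using assms(2) by (simp add: op_norm_def)
qed

lemma psd_deflate:
  fixes S :: "real^'n^'n"
  assumes "psd S" "S *v u = M *\<^sub>R u" "norm u = 1"
  shows "psd (S - M *\<^sub>R outer u)"
  unfolding psd_def
proof
  have t: "transpose S = S" using assms by (simp add: psd_def)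
  show "transpose (S - M *\<^sub>R outer u) = S - M *\<^sub>R outer u"
    unfolding transpose_diff_scale transpose_outer t ..
  show "\<forall>x. 0 \<le> x \<bullet> ((S - M *\<^sub>R outer u) *v x)"
  proof
    fix x
    have uu: "u \<bullet> u = 1" using assms(3) by (metis norm_eq_sqrt_inner real_sqrt_eq_1_iff)
    define c where "c = u \<bullet> x"
    define y where "y = x - c *\<^sub>R u"
    have yu: "y \<bullet> u = 0" by (simp add: y_def c_def inner_diff_left uu inner_commute[of x u])
    have xy: "x = y + c *\<^sub>R u" by (simp add: y_def)
    have "qf S x = qf S y + 2 * c * (y \<bullet> (S *v u)) + c^2 * qf S u"
      unfolding xy by (rule qf_add[OF t])
    also have "y \<bullet> (S *v u) = 0" using assms(2) yu by simp
    also have "qf S u = M" using assms(2) uu by (simp add: qf_def)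
    finally have "qf S x = qf S y + c^2 * M" by simp
    moreover have "qf S y \<ge> 0" using assms(1) by (simp add: psd_def qf_def)
    moreover have "qf (S - M *\<^sub>R outer u) x = qf S x - M * c^2"
      by (simp add: qf_diff qf_scaleR_mat qf_outer c_def)
    moreover have "x \<bullet> ((S - M *\<^sub>R outer u) *v x) = qf (S - M *\<^sub>R outer u) x"
      by (simp only: qf_def)
    ultimately show "0 \<le> x \<bullet> ((S - M *\<^sub>R outer u) *v x)"
      by (simp add: mult.commute)
  qed
qed

lemma muL_integral_even:
  fixes f :: "'a::euclidean_space \<Rightarrow> real"
  assumes "wfL L" "f \<in> borel_measurable borel" "\<And>x. f (-x) = f x"
  shows "(\<integral>x. f x \<partial>muL r L) = (\<Sum>(a,w)\<leftarrow>L. w * f (r *\<^sub>R a))"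
  unfolding muL_integral[OF assms(1,2)] using assms(3)
  by (intro arg_cong[where f=sum_list] map_cong refl) auto

lemma muL_measure:
  fixes L :: "('a::euclidean_space \<times> real) list"
  assumes "wfL L" "S \<in> sets borel"
  shows "measure (muL r L) S = (\<Sum>(a,w)\<leftarrow>L. w/2 * (indicator S (r *\<^sub>R a) + indicator S (-(r *\<^sub>R a))))"
proof -
  have sp: "space (muL r L) = UNIV" by (simp add: muL_def)
  have "(\<integral>x. indicator S x \<partial>muL r L) = measure (muL r L) (S \<inter> space (muL r L))"
    by (rule Bochner_Integration.integral_indicator)
  hence "measure (muL r L) S = (\<integral>x. indicator S x \<partial>muL r L)" by (simp add: sp)
  also have "\<dots> = (\<Sum>(a,w)\<leftarrow>L. w/2 * (indicator S (r *\<^sub>R a) + indicator S (-(r *\<^sub>R a))))"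
    by (rule muL_integral[OF assms(1)]) (use assms(2) in simp)
  finally show ?thesis .
qed

lemma psd_diag_nonneg:
  fixes S :: "real^'n^'n"
  assumes "psd S" shows "0 \<le> S$i$i"
proof -
  have "0 \<le> qf S (axis i 1)" using assms(1) by (simp add: psd_def qf_def)
  thus ?thesis by (simp add: qf_axis)
qed

lemma psd_trace_zero:
  fixes S :: "real^'n^'n"
  assumes "psd S" "trace S = 0"
  shows "S = 0"
proof -
  have d: "\<forall>i\<in>UNIV. 0 \<le> S$i$i" using psd_diag_nonneg[OF assms(1)] by blast
  hence "\<forall>i\<in>UNIV. S$i$i = 0" using assms(2) by (simp add: trace_def sum_nonneg_eq_0_iff)
  hence "S$j$i = 0" for i j using psd_zero_diag[OF assms(1), of i j] by simp
  thus ?thesis by (simp add: vec_eq_iff)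
qed

lemma trace_nonneg:
  fixes S :: "real^'n^'n"
  assumes "psd S" shows "trace S \<ge> 0"
  using psd_diag_nonneg[OF assms] unfolding trace_def by (intro sum_nonneg) auto

lemma sum_list_map_div: "sum_list (map (\<lambda>x. f x / (c::real)) xs) = sum_list (map f xs) / c"
  by (induction xs) (simp_all add: add_divide_distrib)

locale cfg =
  fixes S :: "real^'d^'d" and u :: "real^'d" and ws :: "(real^'d) list" and T M :: real
  assumes Tpos: "T > 0" and Mpos: "M > 0" and MT: "M \<le> T/2" and nu: "norm u = 1"
    and mx: "\<forall>v. qf S v \<le> M * (norm v)^2" and Mu: "qf S u = M"
    and decomp: "S = M *\<^sub>R outer u + sum_list (map outer ws)"
    and wsne: "\<forall>w\<in>set ws. w \<noteq> 0" and wsu: "\<forall>w\<in>set ws. w \<bullet> u = 0"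
    and wsT: "sum_list (map (\<lambda>w. (norm w)^2) ws) = T - M"
begin

definition r where "r = sqrt T"
definition L where "L = (u, M/T) # map (\<lambda>w. ((1/norm w) *\<^sub>R w, (norm w)^2/T)) ws"
definition mu where "mu = muL r L"

lemma r_pos: "r > 0" using Tpos by (simp add: r_def)
lemma rr: "r^2 = T" using Tpos by (simp add: r_def)
lemma rr': "r * r = T" using rr by (simp add: power2_eq_square)

lemma wfL: "wfL L"
proof -
  have "sum_list (map snd L) = M/T + (T - M)/T"
    by (simp add: L_def comp_def sum_list_map_div wsT)
  also have "\<dots> = 1" using Tpos by (simp add: field_simps)
  finally show ?thesis using Tpos Mpos by (auto simp: wfL_def L_def)
qed

lemma L_norm: "\<forall>z\<in>set L. norm (fst z) = 1"
  using nu wsne by (auto simp: L_def)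

lemma mu_prob: "prob_space mu" by (simp add: mu_def muL_prob[OF wfL])
lemma mu_sets: "sets mu = sets borel" by (simp add: mu_def muL_sets)
lemma mu_sym: "symmetric_measure mu" by (simp add: mu_def muL_symmetric[OF wfL])

lemma mu_int_even:
  fixes f :: "real^'d \<Rightarrow> real"
  assumes "f \<in> borel_measurable borel" "\<And>x. f (-x) = f x"
  shows "(\<integral>x. f x \<partial>mu) = M/T * f (r *\<^sub>R u) + (\<Sum>w\<leftarrow>ws. (norm w)^2/T * f (r *\<^sub>R ((1/norm w) *\<^sub>R w)))"
  unfolding mu_def muL_integral_even[OF wfL assms] by (simp add: L_def comp_def)

lemma mu_integrable:
  fixes f :: "real^'d \<Rightarrow> real"
  assumes "f \<in> borel_measurable borel"
  shows "integrable mu f"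
  unfolding mu_def by (rule muL_integrable[OF wfL assms])

lemma mu_sphere: "measure mu {x. (norm x)^2 = T} = 1"
proof -
  have Sb: "{x::real^'d. (norm x)^2 = T} \<in> sets borel"
  proof -
    have "closed {x::real^'d. (norm x)^2 = T}"
      by (intro closed_Collect_eq continuous_intros)
    thus ?thesis by (rule borel_closed)
  qed
  have "measure mu {x. (norm x)^2 = T} = (\<Sum>(a,w)\<leftarrow>L. w/2 * (indicator {x. (norm x)^2 = T} (r *\<^sub>R a) + indicator {x. (norm x)^2 = T} (-(r *\<^sub>R a))))"
    unfolding mu_def by (rule muL_measure[OF wfL Sb])
  also have "\<dots> = (\<Sum>(a,w)\<leftarrow>L. w)"
  proof (intro arg_cong[where f=sum_list] map_cong refl)
    fix z assume "z \<in> set L"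
    hence "norm (fst z) = 1" using L_norm by blast
    hence "(norm (r *\<^sub>R fst z))^2 = T" using r_pos rr by simp
    thus "(case z of (a,w) \<Rightarrow> w/2 * (indicator {x. (norm x)^2 = T} (r *\<^sub>R a) + indicator {x. (norm x)^2 = T} (-(r *\<^sub>R a))))
        = (case z of (a,w) \<Rightarrow> w)"
      by (cases z) (simp add: indicator_def)
  qed
  also have "\<dots> = sum_list (map snd L)" by (simp add: case_prod_beta')
  also have "\<dots> = 1" using wfL by (simp add: wfL_def)
  finally show ?thesis .
qed

lemma mu_cov: "(\<integral>x. x $ i * x $ j \<partial>mu) = S $ i $ j"
proof -
  have m: "(\<lambda>x::real^'d. x $ i * x $ j) \<in> borel_measurable borel" by measurable
  have "(\<integral>x. x $ i * x $ j \<partial>mu) = M/T * ((r * u$i) * (r * u$j))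
       + (\<Sum>w\<leftarrow>ws. (norm w)^2/T * ((r * (w$i / norm w)) * (r * (w$j / norm w))))"
    by (subst mu_int_even[OF m]) simp_all
  also have "M/T * ((r * u$i) * (r * u$j)) = M * (u$i * u$j)"
    using Tpos rr' by (simp add: field_simps)
  also have "(\<Sum>w\<leftarrow>ws. (norm w)^2/T * ((r * (w$i / norm w)) * (r * (w$j / norm w)))) = (\<Sum>w\<leftarrow>ws. w$i * w$j)"
  proof (intro arg_cong[where f=sum_list] map_cong refl)
    fix w assume "w \<in> set ws"
    hence "norm w \<noteq> 0" using wsne by auto
    thus "(norm w)^2/T * ((r * (w$i / norm w)) * (r * (w$j / norm w))) = w$i * w$j"
      using Tpos rr' by (simp add: field_simps power2_eq_square)
  qed
  also have "M * (u$i * u$j) + (\<Sum>w\<leftarrow>ws. w$i * w$j) = S $ i $ j"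
    by (subst decomp) (simp add: outer_def sum_list_outer_entry)
  finally show ?thesis .
qed

lemma mu_qf: "(\<integral>x. (x \<bullet> v)^2 \<partial>mu) = qf S v"
proof -
  have m: "(\<lambda>x::real^'d. (x \<bullet> v)^2) \<in> borel_measurable borel" by measurable
  have "(\<integral>x. (x \<bullet> v)^2 \<partial>mu) = M/T * (r * (u \<bullet> v))^2
       + (\<Sum>w\<leftarrow>ws. (norm w)^2/T * (r * ((w \<bullet> v) / norm w))^2)"
    by (subst mu_int_even[OF m]) (simp_all add: inner_minus_left)
  also have "M/T * (r * (u \<bullet> v))^2 = M * (u \<bullet> v)^2"
    using Tpos rr by (simp add: field_simps power_mult_distrib)
  also have "(\<Sum>w\<leftarrow>ws. (norm w)^2/T * (r * ((w \<bullet> v) / norm w))^2) = (\<Sum>w\<leftarrow>ws. (w \<bullet> v)^2)"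
  proof (intro arg_cong[where f=sum_list] map_cong refl)
    fix w assume "w \<in> set ws"
    hence "norm w \<noteq> 0" using wsne by auto
    thus "(norm w)^2/T * (r * ((w \<bullet> v) / norm w))^2 = (w \<bullet> v)^2"
      using Tpos rr by (simp add: field_simps power_mult_distrib)
  qed
  also have "M * (u \<bullet> v)^2 + (\<Sum>w\<leftarrow>ws. (w \<bullet> v)^2) = qf S v"
    by (subst decomp) (simp add: qf_add_mat qf_scaleR_mat qf_outer qf_sum_list_outer)
  finally show ?thesis .
qed

definition atoms where "atoms = fst ` set (symL r L)"

lemma atoms_prop:
  assumes "z \<in> atoms"
  shows "(norm z)^2 = T \<and> ((z \<bullet> u = r \<or> z \<bullet> u = - r) \<or> z \<bullet> u = 0)"
proof -
  from assms obtain a w where aw: "(a,w) \<in> set L" and z: "z = r *\<^sub>R a \<or> z = -(r *\<^sub>R a)"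
    by (auto simp: atoms_def set_symL)
  have na: "norm a = 1" using L_norm aw by force
  have "(norm z)^2 = T" using z na rr r_pos by auto
  moreover have "a = u \<or> a \<bullet> u = 0"
    using aw wsu by (auto simp: L_def)
  hence "(z \<bullet> u = r \<or> z \<bullet> u = - r) \<or> z \<bullet> u = 0"
    using z nu by (auto simp: power2_norm_eq_inner[symmetric] dot_square_norm)
  ultimately show ?thesis by blast
qed

lemma mu_AE: "AE x in mu. x \<in> atoms"
  unfolding mu_def atoms_def by (rule muL_AE[OF wfL])

end

context cfg begin

definition fU :: "real^'d \<Rightarrow> real" where "fU x = min 1 ((x \<bullet> u)^2 / T) - M/T"

lemma fU_borel: "fU \<in> borel_measurable borel"
  unfolding fU_def by measurable

lemma fU_meas: "fU \<in> borel_measurable mu"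
  unfolding measurable_cong_sets[OF mu_sets refl] by (rule fU_borel)

lemma fU_bound: "\<forall>x\<in>space mu. \<bar>fU x\<bar> \<le> 1"
proof
  fix x
  define a where "a = (x \<bullet> u)^2 / T"
  define b where "b = M / T"
  have "0 \<le> a" using Tpos by (simp add: a_def)
  moreover have "b \<le> 1/2" "0 < b" using MT Tpos Mpos by (simp_all add: b_def field_simps)
  ultimately have "\<bar>min 1 a - b\<bar> \<le> 1" by (cases "a \<le> 1") (simp_all add: min_def abs_le_iff)
  thus "\<bar>fU x\<bar> \<le> 1" unfolding fU_def a_def b_def .
qed

lemma fU_even: "fU (-x) = fU x" by (simp add: fU_def)

lemma fU_ru: "fU (r *\<^sub>R u) = 1 - M/T"
  using nu rr Tpos by (simp add: fU_def power_mult_distrib dot_square_norm)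

lemma fU_w: "w \<in> set ws \<Longrightarrow> fU (r *\<^sub>R ((1/norm w) *\<^sub>R w)) = - (M/T)"
  using wsu by (simp add: fU_def)

lemma wsT': "(\<Sum>w\<leftarrow>ws. (norm w)^2/T) = 1 - M/T"
  using Tpos by (simp add: sum_list_map_div wsT field_simps)

lemma sum_ws_const: "(\<Sum>w\<leftarrow>ws. (norm w)^2/T * c) = (1 - M/T) * c"
proof -
  have "(\<Sum>w\<leftarrow>ws. (norm w)^2/T * c) = (\<Sum>w\<leftarrow>ws. (norm w)^2/T) * c"
    by (induction ws) (simp_all add: algebra_simps)
  thus ?thesis using wsT' by simp
qed

lemma fU_wsum: "(\<Sum>w\<leftarrow>ws. (norm w)^2/T * g (fU (r *\<^sub>R ((1/norm w) *\<^sub>R w)))) = (\<Sum>w\<leftarrow>ws. (norm w)^2/T * g (- (M/T)))"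
  by (intro arg_cong[where f=sum_list] map_cong refl) (simp only: fU_w)

lemma fU_int: "(\<integral>x. fU x \<partial>mu) = 0"
proof -
  have "(\<integral>x. fU x \<partial>mu) = M/T * fU (r *\<^sub>R u) + (\<Sum>w\<leftarrow>ws. (norm w)^2/T * fU (r *\<^sub>R ((1/norm w) *\<^sub>R w)))"
    by (rule mu_int_even[OF fU_borel fU_even])
  also have "\<dots> = M/T * (1 - M/T) + (\<Sum>w\<leftarrow>ws. (norm w)^2/T * (- (M/T)))"
    using fU_wsum[of "\<lambda>t. t"] by (simp only: fU_ru)
  also have "\<dots> = 0" unfolding sum_ws_const by (simp add: algebra_simps)
  finally show ?thesis .
qed

lemma fU_m2: "(\<integral>x. (fU x)^2 \<partial>mu) = M/T * (1 - M/T)"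
proof -
  have m: "(\<lambda>x. (fU x)^2) \<in> borel_measurable borel" using fU_borel by measurable
  have "(\<integral>x. (fU x)^2 \<partial>mu) = M/T * (fU (r *\<^sub>R u))^2 + (\<Sum>w\<leftarrow>ws. (norm w)^2/T * (fU (r *\<^sub>R ((1/norm w) *\<^sub>R w)))^2)"
    by (rule mu_int_even[OF m]) (simp add: fU_even)
  also have "\<dots> = M/T * (1 - M/T)^2 + (\<Sum>w\<leftarrow>ws. (norm w)^2/T * (- (M/T))^2)"
    using fU_wsum[of "\<lambda>t. t^2"] by (simp only: fU_ru)
  also have "\<dots> = M/T * (1 - M/T)" unfolding sum_ws_const using Tpos by (simp add: power2_eq_square field_simps)
  finally show ?thesis .
qed

lemma fU_m4: "(\<integral>x. (fU x)^4 \<partial>mu) \<le> (\<integral>x. (fU x)^2 \<partial>mu)"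
proof (rule integral_mono)
  show "integrable mu (\<lambda>x. (fU x)^4)" "integrable mu (\<lambda>x. (fU x)^2)"
    using fU_borel by (auto intro!: mu_integrable)
  fix x
  have "\<bar>fU x\<bar> \<le> 1" using fU_bound by (simp add: mu_def muL_def)
  hence "(fU x)^2 \<le> 1" using power_mono[of "\<bar>fU x\<bar>" 1 2] by simp
  moreover have "(fU x)^4 = (fU x)^2 * (fU x)^2" by algebra
  moreover have "(fU x)^2 * (fU x)^2 \<le> (fU x)^2 * 1"
    using \<open>(fU x)^2 \<le> 1\<close> by (intro mult_left_mono) simp_all
  ultimately show "(fU x)^4 \<le> (fU x)^2" by simp
qed

end

context cfg begin

lemma W21_ge:
  assumes "norm v = 1"
  shows "W2_sq (distr mu borel (\<lambda>x. x \<bullet> v)) (distr (sym_empirical X n) borel (\<lambda>x. x \<bullet> v))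
         \<le> W21_sq mu (sym_empirical X n)"
  unfolding W21_sq_def by (rule SUP_upper) (use assms in simp)

lemma nu1_int:
  fixes h :: "real \<Rightarrow> real"
  assumes "h \<in> borel_measurable borel"
  shows "(\<integral>y. h y \<partial>distr mu borel (\<lambda>x. x \<bullet> v)) = (\<integral>x. h (x \<bullet> v) \<partial>mu)"
    and "integrable (distr mu borel (\<lambda>x. x \<bullet> v)) h"
proof -
  have m: "(\<lambda>x::real^'d. x \<bullet> v) \<in> measurable mu borel"
    unfolding measurable_cong_sets[OF mu_sets refl] by measurable
  show "(\<integral>y. h y \<partial>distr mu borel (\<lambda>x. x \<bullet> v)) = (\<integral>x. h (x \<bullet> v) \<partial>mu)"
    by (rule integral_distr[OF m assms])
  show "integrable (distr mu borel (\<lambda>x. x \<bullet> v)) h"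
    by (subst integrable_distr_eq[OF m assms]) (rule mu_integrable, use assms in measurable)
qed

lemma W_A:
  fixes X :: "nat \<Rightarrow> real^'d"
  assumes n: "n \<ge> 1" and X: "\<forall>i\<in>{..<n}. X i \<in> atoms"
  shows "ennreal (T / n * \<bar>\<Sum>i<n. fU (X i)\<bar>) \<le> W21_sq mu (sym_empirical X n)"
proof -
  let ?n1 = "distr mu borel (\<lambda>x. x \<bullet> u)"
  let ?n2 = "distr (sym_empirical X n) borel (\<lambda>x. x \<bullet> u)"
  define A where "A = (\<Sum>i<n. (X i \<bullet> u)^2) / n"
  define R where "R = {r, -r, 0}"
  have finR: "finite R" by (simp add: R_def)
  have Rb: "{x \<in> space borel. x \<in> R} \<in> sets borel"
    using finR by (simp add: finite_imp_closed borel_closed)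
  have mu_m: "(\<lambda>x::real^'d. x \<bullet> u) \<in> measurable mu borel"
    unfolding measurable_cong_sets[OF mu_sets refl] by measurable
  have atR: "z \<bullet> u \<in> R" "-z \<bullet> u \<in> R" if "z \<in> atoms" for z
    using atoms_prop[OF that] by (auto simp: R_def)
  have ae1: "AE y in ?n1. y \<in> R"
    by (subst AE_distr_iff[OF mu_m Rb]) (use mu_AE atR in \<open>auto elim: AE_mp\<close>)
  have ae2: "AE y in ?n2. y \<in> R"
    using emp_AE[OF n, where X=X and v=u] X atR by (auto simp: set_empMS elim!: AE_mp)
  have sq: "(\<lambda>y::real. y^2) \<in> borel_measurable borel" by measurable
  have msq: "(\<lambda>y::real. - (y^2)) \<in> borel_measurable borel" by measurable
  have i1: "(\<integral>y. y^2 \<partial>?n1) = M" using nu1_int(1)[OF sq] mu_qf Mu by simp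
  have i1': "(\<integral>y. - (y^2) \<partial>?n1) = - M" using nu1_int(1)[OF msq] mu_qf Mu by simp
  have i2: "(\<integral>y. y^2 \<partial>?n2) = A" unfolding A_def by (rule emp_integral[OF n sq]) simp
  have i2': "(\<integral>y. - (y^2) \<partial>?n2) = - A"
    unfolding A_def using emp_integral[OF n msq, where X=X and v=u] by (simp add: sum_negf)
  have rr2: "r^2 = T" by (rule rr)
  have W1: "ennreal (M - A) \<le> W2_sq ?n1 ?n2"
    using W2_lower[OF ae1 ae2 nu1_int(2)[OF sq] emp_integrable[OF n sq] _ _ sq sq] i1 i2
    by (force simp: R_def power2_eq_square)
  have W2: "ennreal (A - M) \<le> W2_sq ?n1 ?n2"
    using W2_lower[OF ae1 ae2 nu1_int(2)[OF msq] emp_integrable[OF n msq] _ _ msq msq] i1' i2'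
    by (force simp: R_def power2_eq_square)
  have WW: "ennreal \<bar>A - M\<bar> \<le> W2_sq ?n1 ?n2"
    using W1 W2 by (cases "A \<ge> M") (simp_all add: abs_if)
  have fUX: "fU (X i) = (X i \<bullet> u)^2 / T - M/T" if "i < n" for i
  proof -
    have "(X i \<bullet> u)^2 = T \<or> X i \<bullet> u = 0" using atoms_prop[of "X i"] X that rr by auto
    hence "min 1 ((X i \<bullet> u)^2 / T) = (X i \<bullet> u)^2 / T" using Tpos by auto
    thus ?thesis by (simp add: fU_def)
  qed
  have "T / n * (\<Sum>i<n. fU (X i)) = T / n * ((\<Sum>i<n. (X i \<bullet> u)^2) / T - n * (M/T))"
    using fUX by (simp add: sum_subtractf sum_divide_distrib)
  also have "\<dots> = A - M" using Tpos n by (simp add: A_def field_simps)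
  finally have "T / n * \<bar>\<Sum>i<n. fU (X i)\<bar> = \<bar>A - M\<bar>"
    using Tpos by (metis abs_mult abs_of_nonneg divide_nonneg_nonneg less_imp_le of_nat_0_le_iff)
  thus ?thesis using WW W21_ge[OF nu, where X=X and n=n] by simp
qed

lemma W_B:
  fixes X :: "nat \<Rightarrow> real^'d"
  assumes n: "n \<ge> 1" and X: "\<forall>i\<in>{..<n}. X i \<in> atoms"
  shows "ennreal (- (2/5) * M + (2/7) * (T / n)) \<le> W21_sq mu (sym_empirical X n)"
proof -
  have X0: "X 0 \<in> atoms" using X n by auto
  have "(norm (X 0))^2 = T" using atoms_prop[OF X0] by simp
  hence nX0: "norm (X 0) = r" unfolding r_def using real_sqrt_abs[of "norm (X 0)"] by simp
  define v where "v = (1/r) *\<^sub>R X 0"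
  have nv: "norm v = 1" using nX0 r_pos by (simp add: v_def)
  have X0v: "X 0 \<bullet> v = r"
    using nX0 r_pos by (simp add: v_def dot_square_norm power2_eq_square)
  let ?n1 = "distr mu borel (\<lambda>x. x \<bullet> v)"
  let ?n2 = "distr (sym_empirical X n) borel (\<lambda>x. x \<bullet> v)"
  define A where "A = (\<Sum>i<n. (X i \<bullet> v)^2) / n"
  have g: "(\<lambda>y::real. - (2/5) * y^2) \<in> borel_measurable borel" by measurable
  have h: "(\<lambda>y::real. - (2/7) * y^2) \<in> borel_measurable borel" by measurable
  have i1: "(\<integral>y. - (2/5) * y^2 \<partial>?n1) = - (2/5) * qf S v"
    using nu1_int(1)[OF g] mu_qf by simp
  have i2: "(\<integral>y. - (2/7) * y^2 \<partial>?n2) = - (2/7) * A"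
    unfolding A_def using emp_integral[OF n h, where X=X and v=v] by (simp add: sum_distrib_left)
  have pt: "- (2/5) * x^2 - (- (2/7) * y^2) \<le> (x - y)^2" for x y :: real
  proof -
    have "0 \<le> (7 * x - 5 * y)^2" by simp
    thus ?thesis by (simp add: power2_eq_square algebra_simps)
  qed
  have W: "ennreal (- (2/5) * qf S v - (- (2/7) * A)) \<le> W2_sq ?n1 ?n2"
    using W2_lower[where ?S1.0=UNIV and ?S2.0=UNIV, OF _ _ nu1_int(2)[OF g, where v=v] emp_integrable[OF n h, where X=X and v=v] _ _ g h] i1 i2 pt
    by simp
  have "qf S v \<le> M" using mx nv by (metis mult.right_neutral one_power2)
  moreover have "T \<le> (\<Sum>i<n. (X i \<bullet> v)^2)"
  proof -
    have "(X 0 \<bullet> v)^2 \<le> (\<Sum>i<n. (X i \<bullet> v)^2)"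
      using n by (intro member_le_sum) auto
    thus ?thesis using X0v rr by simp
  qed
  hence "T / n \<le> A" using n by (simp add: A_def divide_right_mono)
  ultimately have "- (2/5) * M + (2/7) * (T / n) \<le> - (2/5) * qf S v - (- (2/7) * A)" by simp
  hence "ennreal (- (2/5) * M + (2/7) * (T / n)) \<le> ennreal (- (2/5) * qf S v - (- (2/7) * A))"
    by (rule ennreal_leI)
  thus ?thesis using W W21_ge[OF nv, where X=X and n=n] by (meson order_trans)
qed

end

lemma arith1:
  fixes s :: real
  assumes "0 \<le> s" "s < 169/400"
  shows "(1 + sqrt s)/16 \<le> 2/7 - 2 * s / 5"
proof -
  have "sqrt s < sqrt (169/400)" using assms by (simp only: real_sqrt_less_iff)
  also have "sqrt (169/400) = (13/20::real)"
    by (rule real_sqrt_unique) (simp_all add: power2_eq_square)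
  finally show ?thesis using assms by simp
qed

lemma arith2:
  fixes s \<sigma> :: real
  assumes "\<sigma> > 0" "\<sigma>^2 \<ge> s/2" "s \<ge> 169/400"
  shows "(1 + sqrt s)/16 \<le> (9/16)*\<sigma> - 1/(16*\<sigma>)"
proof -
  define x where "x = sqrt s"
  have x0: "x \<ge> 0" using assms by (simp add: x_def)
  have xx: "x^2 = s" using assms by (simp add: x_def)
  have h1: "x^2 \<le> ((3/2)*\<sigma>)^2" using assms xx by (simp add: power2_eq_square)
  have h2: "0 \<le> (3/2)*\<sigma>" using assms by simp
  have x15: "x \<le> (3/2)*\<sigma>" by (rule power2_le_imp_le[OF h1 h2])
  have h3: "(9/20)^2 \<le> \<sigma>^2" using assms by (simp add: power2_eq_square)
  have h4: "0 \<le> \<sigma>" using assms by simp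
  have s9: "9/20 \<le> \<sigma>" by (rule power2_le_imp_le[OF h3 h4])
  have "0 \<le> (\<sigma> - 9/20) * (15/2*\<sigma> + 19/8)" using s9 assms by simp
  hence q: "0 \<le> 15/2*\<sigma>^2 - \<sigma> - 1" by (simp add: algebra_simps power2_eq_square)
  have "\<sigma> * x \<le> \<sigma> * ((3/2)*\<sigma>)" using x15 assms by (intro mult_left_mono) simp_all
  hence "\<sigma> * (1 + x) \<le> 9 * \<sigma>^2 - 1" using q by (simp add: algebra_simps power2_eq_square)
  hence "\<sigma> * (1 + x) / (16 * \<sigma>) \<le> (9 * \<sigma>^2 - 1) / (16 * \<sigma>)"
    using assms by (intro divide_right_mono) simp_all
  also have "\<sigma> * (1 + x) / (16 * \<sigma>) = (1 + x)/16" using assms by simp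
  also have "(9 * \<sigma>^2 - 1) / (16 * \<sigma>) = (9/16)*\<sigma> - 1/(16*\<sigma>)"
    using assms by (simp add: field_simps power2_eq_square)
  finally show ?thesis by (simp add: x_def)
qed

lemma pw:
  fixes \<sigma> y :: real
  assumes "\<sigma> > 0"
  shows "3/(4*\<sigma>) * y^2 - 1/(16*\<sigma>^3) * y^4 \<le> \<bar>y\<bar>"
proof -
  define a where "a = \<bar>y\<bar>"
  have a0: "a \<ge> 0" by (simp add: a_def)
  have y2: "y^2 = a^2" by (simp add: a_def)
  have y4: "y^4 = (y^2)^2" by simp
  have "0 \<le> a * (a - 2*\<sigma>)^2 * (a + 4*\<sigma>)" using a0 assms by simp
  also have "a * (a - 2*\<sigma>)^2 * (a + 4*\<sigma>) = a^4 - 12*\<sigma>^2*a^2 + 16*\<sigma>^3*a"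
    by (simp add: power2_eq_square power3_eq_cube algebra_simps) (simp add: power_def)
  finally have k: "12*\<sigma>^2*a^2 - a^4 \<le> 16*\<sigma>^3*a" by simp
  have "3/(4*\<sigma>) * y^2 - 1/(16*\<sigma>^3) * y^4 = (12*\<sigma>^2*a^2 - a^4) / (16*\<sigma>^3)"
    unfolding y4 y2 using assms by (simp add: field_simps power2_eq_square power3_eq_cube power4_eq_xxxx)
  also have "\<dots> \<le> (16*\<sigma>^3*a) / (16*\<sigma>^3)" using k assms by (intro divide_right_mono) simp_all
  also have "\<dots> = a" using assms by simp
  finally show ?thesis by (simp add: a_def)
qed

context cfg begin

lemma bound:
  fixes n :: nat
  assumes n: "n \<ge> 1"
  shows "ennreal (1/16 * M * (T / (real n * M) + sqrt (T / (real n * M))))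
         \<le> (\<integral>\<^sup>+X. W21_sq mu (sym_empirical X n) \<partial>PiM {..<n} (\<lambda>_. mu))"
proof -
  let ?Pi = "PiM {..<n} (\<lambda>_. mu)"
  interpret Pi: prob_space ?Pi by (rule PiM_prob[OF mu_prob])
  define Q where "Q = T / n"
  define s where "s = n * M / T"
  define Bc where "Bc = - (2/5) * M + (2/7) * Q"
  define SX where "SX = (\<lambda>X. \<Sum>i<n. fU (X i))"
  have Qpos: "Q > 0" using Tpos n by (simp add: Q_def)
  have spos: "s > 0" using Tpos Mpos n by (simp add: s_def)
  have MQs: "M = Q * s" using Tpos n by (simp add: Q_def s_def field_simps)
  have AEat: "AE X in ?Pi. \<forall>i\<in>{..<n}. X i \<in> atoms"
    by (rule PiM_AE_all[OF mu_prob mu_AE])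
  have low: "(\<integral>\<^sup>+X. ennreal (max (Q * \<bar>SX X\<bar>) Bc) \<partial>?Pi)
       \<le> (\<integral>\<^sup>+X. W21_sq mu (sym_empirical X n) \<partial>?Pi)"
  proof (rule nn_integral_mono_AE)
    show "AE X in ?Pi. ennreal (max (Q * \<bar>SX X\<bar>) Bc) \<le> W21_sq mu (sym_empirical X n)"
      using AEat
    proof (rule AE_mp, intro AE_I2 impI)
      fix X assume X: "\<forall>i\<in>{..<n}. X i \<in> atoms"
      have a: "ennreal (Q * \<bar>SX X\<bar>) \<le> W21_sq mu (sym_empirical X n)"
        using W_A[OF n X] by (simp add: Q_def SX_def)
      have b: "ennreal Bc \<le> W21_sq mu (sym_empirical X n)"
        using W_B[OF n X] by (simp add: Bc_def Q_def)
      show "ennreal (max (Q * \<bar>SX X\<bar>) Bc) \<le> W21_sq mu (sym_empirical X n)"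
        using a b by (cases "Q * \<bar>SX X\<bar> \<le> Bc") (simp_all add: max_def)
    qed
  qed
  have tgt: "1/16 * M * (T / (real n * M) + sqrt (T / (real n * M))) = Q/16 * (1 + sqrt s)"
  proof -
    have e1: "T / (real n * M) = 1 / s" using Tpos Mpos n by (simp add: s_def)
    have e2: "M * (1 / s) = Q" using MQs spos by simp
    have e3: "M * sqrt (1 / s) = Q * sqrt s"
    proof -
      have "sqrt s * sqrt s = s" using spos by simp
      hence "M * sqrt (1 / s) = Q * s / sqrt s" using MQs by (simp add: real_sqrt_divide)
      also have "\<dots> = Q * sqrt s" using spos \<open>sqrt s * sqrt s = s\<close>
        by (metis nonzero_mult_div_cancel_right mult.assoc real_sqrt_gt_0_iff less_irrefl)
      finally show ?thesis .
    qed
    show ?thesis unfolding e1 using e2 e3 by (simp add: algebra_simps)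
  qed
  show ?thesis
  proof (cases "s < 169/400")
    case True
    have a1: "(1 + sqrt s)/16 \<le> 2/7 - 2 * s / 5" by (rule arith1) (use True spos in auto)
    have "Q * ((1 + sqrt s)/16) \<le> Q * (2/7 - 2 * s / 5)" by (rule mult_left_mono[OF a1]) (use Qpos in simp)
    hence "Q/16 * (1 + sqrt s) \<le> Q * (2/7 - 2 * s / 5)" by simp
    also have "Q * (2/7 - 2 * s / 5) = Bc" by (simp add: Bc_def MQs algebra_simps)
    finally have "ennreal (Q/16 * (1 + sqrt s)) \<le> ennreal Bc" by (rule ennreal_leI)
    also have "ennreal Bc = (\<integral>\<^sup>+X. ennreal Bc \<partial>?Pi)" by (simp add: Pi.emeasure_space_1)
    also have "\<dots> \<le> (\<integral>\<^sup>+X. ennreal (max (Q * \<bar>SX X\<bar>) Bc) \<partial>?Pi)"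
      by (intro nn_integral_mono ennreal_leI) simp
    also note low
    finally show ?thesis unfolding tgt .
  next
    case False
    hence s0: "s \<ge> 169/400" by simp
    define p where "p = M / T"
    define m2 where "m2 = (\<integral>x. (fU x)^2 \<partial>mu)"
    define m4 where "m4 = (\<integral>x. (fU x)^4 \<partial>mu)"
    have m2e: "m2 = p * (1 - p)" by (simp add: m2_def p_def fU_m2)
    have m42: "m4 \<le> m2" by (simp add: m2_def m4_def fU_m4)
    have p12: "p \<le> 1/2" "0 < p" using MT Tpos Mpos by (simp_all add: p_def field_simps)
    have mom: "(\<integral>X. SX X ^ 2 \<partial>?Pi) = n * m2"
      "(\<integral>X. SX X ^ 4 \<partial>?Pi) = n * m4 + 3 * real n * (real n - 1) * m2^2"
      using moments[OF mu_prob fU_meas fU_bound fU_int, of n] by (simp_all add: SX_def m2_def m4_def)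
    define \<sigma> where "\<sigma> = sqrt (n * m2)"
    have nm2: "n * m2 = s * (1 - p)" using Tpos by (simp add: m2e s_def p_def field_simps)
    have nm2pos: "n * m2 > 0" using nm2 spos p12 by simp
    have sig: "\<sigma> > 0" "\<sigma>^2 = n * m2" using nm2pos by (simp_all add: \<sigma>_def)
    have "s * (1/2) \<le> s * (1 - p)" by (rule mult_left_mono) (use p12 spos in auto)
    hence sig2: "\<sigma>^2 \<ge> s/2" using sig(2) nm2 by simp
    have E4: "(\<integral>X. SX X ^ 4 \<partial>?Pi) \<le> \<sigma>^2 + 3 * (\<sigma>^2)^2"
    proof -
      have "n * m4 \<le> n * m2" using m42 by (simp add: mult_left_mono)
      moreover have "3 * real n * (real n - 1) * m2^2 \<le> 3 * (n * m2)^2"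
      proof -
        have m2nn: "0 \<le> m2" using m2e p12 by simp
        have "3 * real n * (real n - 1) * m2^2 = 3 * (real n * real n) * m2^2 - 3 * real n * m2^2"
          by (simp add: algebra_simps)
        also have "\<dots> \<le> 3 * (real n * real n) * m2^2" using m2nn by simp
        finally show ?thesis by (simp add: power2_eq_square algebra_simps)
      qed
      ultimately show ?thesis using mom(2) sig(2) by simp
    qed
    have int: "integrable ?Pi (\<lambda>X. SX X ^ k)" for k
      unfolding SX_def by (rule S_pow_integrable[OF mu_prob fU_meas fU_bound])
    have intabs: "integrable ?Pi (\<lambda>X. \<bar>SX X\<bar>)" using int[of 1] by simp
    have "3/(4*\<sigma>) * (n * m2) - 1/(16*\<sigma>^3) * (\<integral>X. SX X ^ 4 \<partial>?Pi)
        = (\<integral>X. 3/(4*\<sigma>) * SX X ^ 2 - 1/(16*\<sigma>^3) * SX X ^ 4 \<partial>?Pi)"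
      using int mom by simp
    also have "\<dots> \<le> (\<integral>X. \<bar>SX X\<bar> \<partial>?Pi)"
      by (intro integral_mono intabs pw[OF sig(1)]) (use int in simp)
    finally have E1: "3/(4*\<sigma>) * (n * m2) - 1/(16*\<sigma>^3) * (\<integral>X. SX X ^ 4 \<partial>?Pi) \<le> (\<integral>X. \<bar>SX X\<bar> \<partial>?Pi)" .
    have "1/(16*\<sigma>^3) * (\<integral>X. SX X ^ 4 \<partial>?Pi) \<le> 1/(16*\<sigma>^3) * (\<sigma>^2 + 3 * (\<sigma>^2)^2)"
      using E4 sig by (intro mult_left_mono) simp_all
    also have "1/(16*\<sigma>^3) * (\<sigma>^2 + 3 * (\<sigma>^2)^2) = 1/(16*\<sigma>) + 3/16 * \<sigma>"
      using sig(1) by (simp add: field_simps power2_eq_square power3_eq_cube)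
    finally have "3/(4*\<sigma>) * \<sigma>^2 - (1/(16*\<sigma>) + 3/16 * \<sigma>) \<le> (\<integral>X. \<bar>SX X\<bar> \<partial>?Pi)"
      using E1 sig(2) by simp
    moreover have "3/(4*\<sigma>) * \<sigma>^2 - (1/(16*\<sigma>) + 3/16 * \<sigma>) = (9/16)*\<sigma> - 1/(16*\<sigma>)"
      using sig(1) by (simp add: field_simps power2_eq_square)
    ultimately have EA: "(9/16)*\<sigma> - 1/(16*\<sigma>) \<le> (\<integral>X. \<bar>SX X\<bar> \<partial>?Pi)" by simp
    have "(1 + sqrt s)/16 \<le> (9/16)*\<sigma> - 1/(16*\<sigma>)" by (rule arith2[OF sig(1) sig2 s0])
    hence a2: "(1 + sqrt s)/16 \<le> (\<integral>X. \<bar>SX X\<bar> \<partial>?Pi)" using EA by linarith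
    have "Q * ((1 + sqrt s)/16) \<le> Q * (\<integral>X. \<bar>SX X\<bar> \<partial>?Pi)"
      by (rule mult_left_mono[OF a2]) (use Qpos in simp)
    hence "Q/16 * (1 + sqrt s) \<le> Q * (\<integral>X. \<bar>SX X\<bar> \<partial>?Pi)" by simp
    hence "ennreal (Q/16 * (1 + sqrt s)) \<le> ennreal (Q * (\<integral>X. \<bar>SX X\<bar> \<partial>?Pi))" by (rule ennreal_leI)
    also have "ennreal (Q * (\<integral>X. \<bar>SX X\<bar> \<partial>?Pi)) = ennreal (\<integral>X. Q * \<bar>SX X\<bar> \<partial>?Pi)" by simp
    also have "\<dots> = (\<integral>\<^sup>+X. ennreal (Q * \<bar>SX X\<bar>) \<partial>?Pi)"
      by (rule nn_integral_eq_integral[symmetric]) (use intabs Qpos in simp_all)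
    also have "\<dots> \<le> (\<integral>\<^sup>+X. ennreal (max (Q * \<bar>SX X\<bar>) Bc) \<partial>?Pi)"
      by (intro nn_integral_mono ennreal_leI) simp
    also note low
    finally show ?thesis unfolding tgt .
  qed
qed

end

lemma trace_scaleR_mat: "trace (c *\<^sub>R (A::real^'n^'n)) = c * trace A"
  by (simp add: trace_def sum_distrib_left)

lemma outer_zero: "outer (0::real^'n) = 0"
  by (simp add: outer_def vec_eq_iff)

theorem proposition1p8:
  fixes \<Sigma> :: "real^'d^'d"
  assumes "psd \<Sigma>"
    and "op_norm \<Sigma> \<le> trace \<Sigma> / 2"
  shows "\<exists>\<mu> :: (real^'d) measure.
      prob_space \<mu> \<and> sets \<mu> = sets borel \<and> symmetric_measure \<mu> \<and>
      measure \<mu> {x. (norm x)\<^sup>2 = trace \<Sigma>} = 1 \<and>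
      (\<forall>i j. (\<integral>x. x $ i * x $ j \<partial>\<mu>) = \<Sigma> $ i $ j) \<and>
      (\<forall>n::nat. n \<ge> 1 \<longrightarrow>
         (\<integral>\<^sup>+ X. W21_sq \<mu> (sym_empirical X n) \<partial>(PiM {..<n} (\<lambda>_. \<mu>)))
         \<ge> ennreal (1/16 * op_norm \<Sigma> *
              (trace \<Sigma> / (real n * op_norm \<Sigma>) + sqrt (trace \<Sigma> / (real n * op_norm \<Sigma>)))))"
proof -
  have psd: "psd \<Sigma>" by (rule assms(1))
  have Tnn: "trace \<Sigma> \<ge> 0" by (rule trace_nonneg[OF psd])
  show ?thesis
  proof (cases "trace \<Sigma> = 0")
    case True
    have S0: "\<Sigma> = 0" by (rule psd_trace_zero[OF psd True])
    define L0 :: "((real^'d) \<times> real) list" where "L0 = [(0, 1)]"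
    have wf0: "wfL L0" by (simp add: wfL_def L0_def)
    define \<mu> where "\<mu> = muL 0 L0"
    have Sb: "{x::real^'d. (norm x)^2 = trace \<Sigma>} \<in> sets borel"
    proof -
      have "closed {x::real^'d. (norm x)^2 = trace \<Sigma>}"
        by (intro closed_Collect_eq continuous_intros)
      thus ?thesis by (rule borel_closed)
    qed
    have "prob_space \<mu>" by (simp add: \<mu>_def muL_prob[OF wf0])
    moreover have "sets \<mu> = sets borel" by (simp add: \<mu>_def muL_sets)
    moreover have "symmetric_measure \<mu>" by (simp add: \<mu>_def muL_symmetric[OF wf0])
    moreover have "measure \<mu> {x. (norm x)\<^sup>2 = trace \<Sigma>} = 1"
      unfolding \<mu>_def muL_measure[OF wf0 Sb] using True by (simp add: L0_def)
    moreover have "\<forall>i j. (\<integral>x. x $ i * x $ j \<partial>\<mu>) = \<Sigma> $ i $ j"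
    proof (intro allI)
      fix i j
      have m: "(\<lambda>x::real^'d. x $ i * x $ j) \<in> borel_measurable borel" by measurable
      show "(\<integral>x. x $ i * x $ j \<partial>\<mu>) = \<Sigma> $ i $ j"
        unfolding \<mu>_def muL_integral[OF wf0 m] by (simp add: L0_def S0)
    qed
    moreover have "\<forall>n::nat. n \<ge> 1 \<longrightarrow>
         (\<integral>\<^sup>+ X. W21_sq \<mu> (sym_empirical X n) \<partial>(PiM {..<n} (\<lambda>_. \<mu>)))
         \<ge> ennreal (1/16 * op_norm \<Sigma> *
              (trace \<Sigma> / (real n * op_norm \<Sigma>) + sqrt (trace \<Sigma> / (real n * op_norm \<Sigma>))))"
      using True by simp
    ultimately show ?thesis by blast
  next
    case False
    hence Tpos: "trace \<Sigma> > 0" using Tnn by simp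
    define T where "T = trace \<Sigma>"
    obtain u where nu: "norm u = 1" and mx0: "\<forall>v. qf \<Sigma> v \<le> qf \<Sigma> u * (norm v)^2"
      using exists_max[of \<Sigma>] by blast
    define M where "M = qf \<Sigma> u"
    have mx: "\<forall>v. qf \<Sigma> v \<le> M * (norm v)^2" using mx0 by (simp add: M_def)
    have eig: "\<Sigma> *v u = M *\<^sub>R u" unfolding M_def by (rule eigen_max[OF psd nu]) (use mx0 in blast)
    have opM: "op_norm \<Sigma> = M" unfolding M_def by (rule op_norm_eq[OF psd nu]) (use mx0 in blast)
    have MT: "M \<le> T/2" using assms(2) opM by (simp add: T_def)
    have Mpos: "M > 0"
    proof (rule ccontr)
      assume "\<not> M > 0"
      hence "\<Sigma> $ i $ i \<le> 0" for i
        using mx[rule_format, of "axis i 1"] by (simp add: qf_axis norm_axis_1)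
      hence "trace \<Sigma> \<le> 0" unfolding trace_def by (intro sum_nonpos) auto
      thus False using Tpos by simp
    qed
    have psd': "psd (\<Sigma> - M *\<^sub>R outer u)" by (rule psd_deflate[OF psd eig nu])
    obtain ws0 where ws0: "\<Sigma> - M *\<^sub>R outer u = sum_list (map outer ws0)"
      using psd_decomp[OF psd'] by blast
    define ws where "ws = filter (\<lambda>w. w \<noteq> 0) ws0"
    have Sws: "\<Sigma> - M *\<^sub>R outer u = sum_list (map outer ws)"
      unfolding ws0 ws_def by (rule sum_list_map_filter[symmetric]) (simp add: outer_zero)
    have decomp: "\<Sigma> = M *\<^sub>R outer u + sum_list (map outer ws)"
      using Sws by (simp add: algebra_simps)
    have wsne: "\<forall>w\<in>set ws. w \<noteq> 0" by (simp add: ws_def)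
    have uu: "u \<bullet> u = 1" using nu by (metis norm_eq_sqrt_inner real_sqrt_eq_1_iff)
    have "qf (\<Sigma> - M *\<^sub>R outer u) u = 0"
      by (simp add: qf_diff qf_scaleR_mat qf_outer uu M_def)
    hence s0: "sum_list (map (\<lambda>w. (w \<bullet> u)^2) ws) = 0" unfolding Sws qf_sum_list_outer .
    have "\<forall>w\<in>set ws. (w \<bullet> u)^2 = 0"
      by (rule sum_list_nonneg_zero[OF _ s0]) simp
    hence wsu: "\<forall>w\<in>set ws. w \<bullet> u = 0" by simp
    have "trace (\<Sigma> - M *\<^sub>R outer u) = T - M"
      by (simp add: trace_sub trace_scaleR_mat trace_outer nu T_def)
    hence wsT: "sum_list (map (\<lambda>w. (norm w)^2) ws) = T - M"
      unfolding Sws trace_sum_list_outer .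
    interpret cfg \<Sigma> u ws T M
    proof -
      have TposT: "T > 0" using Tpos by (simp add: T_def)
      have Mu: "qf \<Sigma> u = M" by (simp add: M_def)
      show "cfg \<Sigma> u ws T M" by (rule cfg.intro[OF TposT Mpos MT nu mx Mu decomp wsne wsu wsT])
    qed
    have "\<forall>n::nat. n \<ge> 1 \<longrightarrow>
         (\<integral>\<^sup>+ X. W21_sq mu (sym_empirical X n) \<partial>(PiM {..<n} (\<lambda>_. mu)))
         \<ge> ennreal (1/16 * op_norm \<Sigma> *
              (trace \<Sigma> / (real n * op_norm \<Sigma>) + sqrt (trace \<Sigma> / (real n * op_norm \<Sigma>))))"
      using bound by (simp add: opM T_def)
    moreover have "measure mu {x. (norm x)\<^sup>2 = trace \<Sigma>} = 1" using mu_sphere by (simp add: T_def)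
    ultimately show ?thesis using mu_prob mu_sets mu_sym mu_cov by blast
  qed
qed

end
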